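(* (i) $\mathcal{A}(r,n)^{\mathbf T}=\mathcal{A}(r,n)^{\mathbf T_{r+2}}$. (ii) A fixed point $\alpha_\mu\in\mathcal{A}(r,n)^{\mathbf T}$ belongs to $\mathcal{Q}(r,n)^{\mathbf T}$ (viewed inside $\mathcal{A}(r,n)$ via $\imath$) if and only if the $r$-partition $\mu$ is nested, i.e. $\mu_r\subseteq\mu_{r-1}\subseteq\cdots\subseteq\mu_1$ as Young diagrams. Hence $\mathcal{Q}(r,n)^{\mathbf T}$ is finite and in bijection with nested $r$-partitions of $n$. (iii) The closed embedding $\mathcal{Q}_0(r,n)\hookrightarrow\mathcal{Q}(r,n)$ induces an isomorphism of $\mathbf T$-fixed loci. Hence $\mathcal{Q}_0(r,n)^{\mathbf T}$ is also finite and in bijection with nested $r$-partitions of $n$.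
   Context: **Moduli spaces.** $\mathcal{A}(r,n)$ is the moduli space of stable ADHM data $(V,B_1,B_2,I,J)$ with $\dim V=n$, $V_\infty=\mathbb{C}^r$ (basis $e_a$), $[B_1,B_2]+IJ=0$, and no proper $B_1,B_2$-invariant subspace containing $\mathrm{Im}\,I$. It is identified with the moduli space of rank $r$ framed torsion-free sheaves on $\mathbb{P}^2$ with $c_2=n$. $\mathcal{Q}(r,n)$ is the moduli space of framed cyclic representations $(V,B_1,B_2,B_3,I,J)$. These satisfy $[B_1,B_2]+IJ=0$, $JB_3=A_rJ$, $B_3I=IA_r$ and $[B_3,B_1]=[B_3,B_2]=0$, where $A_re_a=e_{a+1}$ and $e_{r+1}=0$, and no proper nonzero $B_1,B_2,B_3$-invariant subspace contains $\mathrm{Im}\,I$. The closed embedding $\imath:\mathcal{Q}(r,n)\to\mathcal{A}(r,n)$ forgets $B_3$. $\mathcal{Q}_0(r,n)\subset\mathcal{Q}(r,n)$ is the closed subscheme where $J=0$. **Torus actions.** $\mathbf{T}_{r+2}=(\mathbb{C}^\times)^2\times(\mathbb{C}^\times)^r$ acts on $\mathcal{A}(r,n)$ by $(t_1,t_2,u)\cdot(B_1,B_2,I,J)=(t_1B_1,t_2B_2,Iu^{-1},t_1t_2uJ)$, where $u=\mathrm{diag}(u_1,\dots,u_r)$. Its fixed points $\alpha_\mu$ are finitely many and indexed by $r$-partitions $\mu=(\mu_1,\dots,\mu_r)$ of $n$. The point $\alpha_\mu$ corresponds to the framed sheaf $\bigoplus_aI_{Z_{\mu_a}}$, where $I_{Z_{\mu_a}}$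 is the monomial ideal of $\mu_a$ in $\mathbb{A}^2=\mathbb{P}^2\setminus\{z_0=0\}$. $\mathbf{T}=(\mathbb{C}^\times)^3$ embeds in $\mathbf{T}_{r+2}$ by $(t_1,t_2,t_3)\mapsto(t_1,t_2,(t_3^{1-a})_{1\leq a\leq r})$. Writing $I_a=I(e_a)$ and $J_a$ for the components of $J$, $\mathbf{T}$ acts on $\mathcal{Q}(r,n)$ by $(t_i)\cdot(B_i,I_a,J_a)=(t_iB_i,\,t_3^{a-1}I_a,\,t_1t_2t_3^{1-a}J_a)$ for $1\leq i\leq3$. On $\mathcal{A}(r,n)$ it acts by the same formula with $B_3$ omitted. *)

theory Defs
  imports Complex_Main "HOL-Library.Product_Lexorder" "Jordan_Normal_Form.Matrix"
begin

(* All moduli spaces are modelled by their sets of closed points: a point is a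
   GL(V)-orbit (equivalence class) of stable data, with V = C^n (column vectors
   of dimension n) and V_infty = C^r.  Indices are 0-based: e_a (paper, a=1..r)
   is the standard basis vector number a-1. *)

type_synonym adhm = "complex mat \<times> complex mat \<times> complex mat \<times> complex mat"
type_synonym cycrep = "complex mat \<times> complex mat \<times> complex mat \<times> complex mat \<times> complex mat"

definition vsubspace :: "nat \<Rightarrow> complex vec set \<Rightarrow> bool" where
  "vsubspace n S \<longleftrightarrow> S \<subseteq> carrier_vec n \<and> 0\<^sub>v n \<in> S \<and>
     (\<forall>v\<in>S. \<forall>w\<in>S. v + w \<in> S) \<and> (\<forall>c. \<forall>v\<in>S. c \<cdot>\<^sub>v v \<in> S)"

definition stable_wrt :: "nat \<Rightarrow> nat \<Rightarrow> complex mat list \<Rightarrow> complex mat \<Rightarrow> bool" where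
  "stable_wrt r n Bs I \<longleftrightarrow>
     (\<forall>S. vsubspace n S \<and> (\<forall>B\<in>set Bs. \<forall>v\<in>S. B *\<^sub>v v \<in> S)
          \<and> (\<forall>w\<in>carrier_vec r. I *\<^sub>v w \<in> S) \<longrightarrow> S = carrier_vec n)"

definition shift_mat :: "nat \<Rightarrow> complex mat" where
  "shift_mat r = mat r r (\<lambda>(i,j). if i = Suc j then 1 else 0)"

definition adhm_data :: "nat \<Rightarrow> nat \<Rightarrow> adhm \<Rightarrow> bool" where
  "adhm_data r n x \<longleftrightarrow> (case x of (B1,B2,I,J) \<Rightarrow>
     B1 \<in> carrier_mat n n \<and> B2 \<in> carrier_mat n n \<and> I \<in> carrier_mat n r \<and> J \<in> carrier_mat r n \<and>
     B1 * B2 - B2 * B1 + I * J = 0\<^sub>m n n \<and> stable_wrt r n [B1, B2] I)"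

definition cyc_data :: "nat \<Rightarrow> nat \<Rightarrow> cycrep \<Rightarrow> bool" where
  "cyc_data r n x \<longleftrightarrow> (case x of (B1,B2,B3,I,J) \<Rightarrow>
     B1 \<in> carrier_mat n n \<and> B2 \<in> carrier_mat n n \<and> B3 \<in> carrier_mat n n \<and>
     I \<in> carrier_mat n r \<and> J \<in> carrier_mat r n \<and>
     B1 * B2 - B2 * B1 + I * J = 0\<^sub>m n n \<and>
     J * B3 = shift_mat r * J \<and> B3 * I = I * shift_mat r \<and>
     B3 * B1 = B1 * B3 \<and> B3 * B2 = B2 * B3 \<and>
     stable_wrt r n [B1, B2, B3] I)"

definition adhm_equiv :: "nat \<Rightarrow> adhm \<Rightarrow> adhm \<Rightarrow> bool" where
  "adhm_equiv n x y \<longleftrightarrow> (case x of (B1,B2,I,J) \<Rightarrow> case y of (B1',B2',I',J') \<Rightarrow>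
     (\<exists>g \<in> carrier_mat n n. invertible_mat g \<and>
        B1' * g = g * B1 \<and> B2' * g = g * B2 \<and> I' = g * I \<and> J' * g = J))"

definition cyc_equiv :: "nat \<Rightarrow> cycrep \<Rightarrow> cycrep \<Rightarrow> bool" where
  "cyc_equiv n x y \<longleftrightarrow> (case x of (B1,B2,B3,I,J) \<Rightarrow> case y of (B1',B2',B3',I',J') \<Rightarrow>
     (\<exists>g \<in> carrier_mat n n. invertible_mat g \<and>
        B1' * g = g * B1 \<and> B2' * g = g * B2 \<and> B3' * g = g * B3 \<and> I' = g * I \<and> J' * g = J))"

definition adhm_class :: "nat \<Rightarrow> nat \<Rightarrow> adhm \<Rightarrow> adhm set" where
  "adhm_class r n x = {y. adhm_data r n y \<and> adhm_equiv n x y}"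

definition cyc_class :: "nat \<Rightarrow> nat \<Rightarrow> cycrep \<Rightarrow> cycrep set" where
  "cyc_class r n x = {y. cyc_data r n y \<and> cyc_equiv n x y}"

definition A_moduli :: "nat \<Rightarrow> nat \<Rightarrow> adhm set set" where
  "A_moduli r n = adhm_class r n ` {x. adhm_data r n x}"

definition Q_moduli :: "nat \<Rightarrow> nat \<Rightarrow> cycrep set set" where
  "Q_moduli r n = cyc_class r n ` {x. cyc_data r n x}"

definition Q0_moduli :: "nat \<Rightarrow> nat \<Rightarrow> cycrep set set" where
  "Q0_moduli r n = {X \<in> Q_moduli r n. \<forall>x\<in>X. (case x of (B1,B2,B3,I,J) \<Rightarrow> J = 0\<^sub>m r n)}"

definition forget_B3 :: "cycrep \<Rightarrow> adhm" where
  "forget_B3 x = (case x of (B1,B2,B3,I,J) \<Rightarrow> (B1,B2,I,J))"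

definition iota :: "nat \<Rightarrow> nat \<Rightarrow> cycrep set \<Rightarrow> adhm set" where
  "iota r n X = adhm_class r n (forget_B3 (SOME x. x \<in> X))"

definition big_torus :: "nat \<Rightarrow> (complex \<times> complex \<times> (nat \<Rightarrow> complex)) set" where
  "big_torus r = {(t1,t2,u). t1 \<noteq> 0 \<and> t2 \<noteq> 0 \<and> (\<forall>a<r. u a \<noteq> 0)}"

definition adhm_act :: "nat \<Rightarrow> nat \<Rightarrow> complex \<times> complex \<times> (nat \<Rightarrow> complex) \<Rightarrow> adhm \<Rightarrow> adhm" where
  "adhm_act r n t x = (case t of (t1,t2,u) \<Rightarrow> case x of (B1,B2,I,J) \<Rightarrow>
     (t1 \<cdot>\<^sub>m B1, t2 \<cdot>\<^sub>m B2,
      mat n r (\<lambda>(k,a). I $$ (k,a) * inverse (u a)),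
      mat r n (\<lambda>(a,k). t1 * t2 * u a * J $$ (a,k))))"

(* embedding T = (C^* )^3 -> T_{r+2}: u_a = t3^(1-a) (1-based a), i.e. t3^(-a) 0-based *)
definition small_to_big :: "complex \<Rightarrow> complex \<Rightarrow> complex \<Rightarrow> complex \<times> complex \<times> (nat \<Rightarrow> complex)" where
  "small_to_big t1 t2 t3 = (t1, t2, \<lambda>a. inverse (t3 ^ a))"

definition cyc_act :: "nat \<Rightarrow> nat \<Rightarrow> complex \<Rightarrow> complex \<Rightarrow> complex \<Rightarrow> cycrep \<Rightarrow> cycrep" where
  "cyc_act r n t1 t2 t3 x = (case x of (B1,B2,B3,I,J) \<Rightarrow>
     (t1 \<cdot>\<^sub>m B1, t2 \<cdot>\<^sub>m B2, t3 \<cdot>\<^sub>m B3,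
      mat n r (\<lambda>(k,a). t3 ^ a * I $$ (k,a)),
      mat r n (\<lambda>(a,k). t1 * t2 * inverse (t3 ^ a) * J $$ (a,k))))"

definition A_fixed_big :: "nat \<Rightarrow> nat \<Rightarrow> adhm set set" where
  "A_fixed_big r n = {X \<in> A_moduli r n. \<forall>t \<in> big_torus r. adhm_act r n t ` X = X}"

definition A_fixed_T :: "nat \<Rightarrow> nat \<Rightarrow> adhm set set" where
  "A_fixed_T r n = {X \<in> A_moduli r n. \<forall>t1 t2 t3. t1 \<noteq> 0 \<and> t2 \<noteq> 0 \<and> t3 \<noteq> 0 \<longrightarrow>
      adhm_act r n (small_to_big t1 t2 t3) ` X = X}"

definition Q_fixed_T :: "nat \<Rightarrow> nat \<Rightarrow> cycrep set set" where
  "Q_fixed_T r n = {X \<in> Q_moduli r n. \<forall>t1 t2 t3. t1 \<noteq> 0 \<and> t2 \<noteq> 0 \<and> t3 \<noteq> 0 \<longrightarrow>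
      cyc_act r n t1 t2 t3 ` X = X}"

definition Q0_fixed_T :: "nat \<Rightarrow> nat \<Rightarrow> cycrep set set" where
  "Q0_fixed_T r n = {X \<in> Q0_moduli r n. \<forall>t1 t2 t3. t1 \<noteq> 0 \<and> t2 \<noteq> 0 \<and> t3 \<noteq> 0 \<longrightarrow>
      cyc_act r n t1 t2 t3 ` X = X}"

(* Young diagrams: finite down-closed sets of cells (i,j) <-> monomials x^i y^j
   not in the monomial ideal *)
definition young :: "(nat \<times> nat) set \<Rightarrow> bool" where
  "young Y \<longleftrightarrow> finite Y \<and> (\<forall>i j i' j'. (i,j) \<in> Y \<and> i' \<le> i \<and> j' \<le> j \<longrightarrow> (i',j') \<in> Y)"

(* r-partitions of n: mu_0, ..., mu_{r-1} (paper: mu_1..mu_r) *)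
definition r_partitions :: "nat \<Rightarrow> nat \<Rightarrow> (nat \<Rightarrow> (nat \<times> nat) set) set" where
  "r_partitions r n = {\<mu>. (\<forall>a<r. young (\<mu> a)) \<and> (\<forall>a\<ge>r. \<mu> a = {}) \<and> (\<Sum>a<r. card (\<mu> a)) = n}"

definition nested :: "nat \<Rightarrow> (nat \<Rightarrow> (nat \<times> nat) set) \<Rightarrow> bool" where
  "nested r \<mu> \<longleftrightarrow> (\<forall>a. Suc a < r \<longrightarrow> \<mu> (Suc a) \<subseteq> \<mu> a)"

definition nested_partitions :: "nat \<Rightarrow> nat \<Rightarrow> (nat \<Rightarrow> (nat \<times> nat) set) set" where
  "nested_partitions r n = {\<mu> \<in> r_partitions r n. nested r \<mu>}"

(* the fixed point alpha_mu: V = (+)_a C[x,y]/I_{mu_a}, basis = cells (a,i,j) ~ x^i y^j in summand a,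
   ordered lexicographically; B1 = mult. by x, B2 = mult. by y, I(e_a) = 1 in summand a, J = 0 *)
definition cells :: "nat \<Rightarrow> (nat \<Rightarrow> (nat \<times> nat) set) \<Rightarrow> (nat \<times> nat \<times> nat) set" where
  "cells r \<mu> = {(a,i,j). a < r \<and> (i,j) \<in> \<mu> a}"

definition alpha_data :: "nat \<Rightarrow> nat \<Rightarrow> (nat \<Rightarrow> (nat \<times> nat) set) \<Rightarrow> adhm" where
  "alpha_data r n \<mu> = (let L = sorted_list_of_set (cells r \<mu>) in
     (mat n n (\<lambda>(k,l). case L ! l of (a,i,j) \<Rightarrow> if L ! k = (a, Suc i, j) then 1 else 0),
      mat n n (\<lambda>(k,l). case L ! l of (a,i,j) \<Rightarrow> if L ! k = (a, i, Suc j) then 1 else 0),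
      mat n r (\<lambda>(k,a). if L ! k = (a, 0, 0) then 1 else 0),
      0\<^sub>m r n))"

definition alpha :: "nat \<Rightarrow> nat \<Rightarrow> (nat \<Rightarrow> (nat \<times> nat) set) \<Rightarrow> adhm set" where
  "alpha r n \<mu> = adhm_class r n (alpha_data r n \<mu>)"

end

theory Submission
  imports Defs "Jordan_Normal_Form.Char_Poly" "HOL-Computational_Algebra.Primes"
begin


lemma mult_unit_vec_col:
  fixes A :: "complex mat"
  assumes "A \<in> carrier_mat n m" "l < m"
  shows "A *\<^sub>v unit_vec m l = col A l"
proof (rule eq_vecI)
  fix i assume "i < dim_vec (col A l)"
  then have "i < n" using assms by simp
  have "row A i \<bullet> unit_vec m l = row A i $ l" using assms(2) by (rule scalar_prod_right_unit)
  then show "(A *\<^sub>v unit_vec m l) $ i = col A l $ i" using assms \<open>i < n\<close> by simp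
qed (use assms in simp)

lemma mat_eq_unitI:
  fixes A B :: "complex mat"
  assumes "A \<in> carrier_mat n m" "B \<in> carrier_mat n m"
    "\<And>l. l < m \<Longrightarrow> A *\<^sub>v unit_vec m l = B *\<^sub>v unit_vec m l"
  shows "A = B"
  using assms by (intro mat_col_eqI) (auto simp: mult_unit_vec_col[symmetric])

lemma mult_zero_vec_right[simp]:
  fixes A :: "complex mat"
  assumes "A \<in> carrier_mat n m" shows "A *\<^sub>v 0\<^sub>v m = 0\<^sub>v n"
  using assms by (intro eq_vecI) auto

lemma vsub_zero: "vsubspace n S \<Longrightarrow> 0\<^sub>v n \<in> S" unfolding vsubspace_def by auto
lemma vsub_add: "vsubspace n S \<Longrightarrow> v \<in> S \<Longrightarrow> w \<in> S \<Longrightarrow> v + w \<in> S" unfolding vsubspace_def by auto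
lemma vsub_smult: "vsubspace n S \<Longrightarrow> v \<in> S \<Longrightarrow> c \<cdot>\<^sub>v v \<in> S" unfolding vsubspace_def by auto
lemma vsub_carrier: "vsubspace n S \<Longrightarrow> v \<in> S \<Longrightarrow> v \<in> carrier_vec n" unfolding vsubspace_def by auto

definition trunc_vec :: "nat \<Rightarrow> nat \<Rightarrow> complex vec \<Rightarrow> complex vec" where
  "trunc_vec m k w = vec m (\<lambda>i. if i < k then w $ i else 0)"

lemma mat_vec_in_subspace:
  assumes S: "vsubspace n S" and A: "A \<in> carrier_mat n m"
    and cols: "\<And>k. k < m \<Longrightarrow> col A k \<in> S" and w: "w \<in> carrier_vec m"
  shows "A *\<^sub>v w \<in> S"
proof -
  have "\<forall>k\<le>m. A *\<^sub>v trunc_vec m k w \<in> S"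
  proof (intro allI impI)
    fix k assume "k \<le> m" then show "A *\<^sub>v trunc_vec m k w \<in> S"
    proof (induction k)
      case 0
      have "trunc_vec m 0 w = 0\<^sub>v m" by (auto simp: trunc_vec_def)
      then show ?case using A vsub_zero[OF S] by simp
    next
      case (Suc k)
      then have k: "k < m" by simp
      have eq: "trunc_vec m (Suc k) w = trunc_vec m k w + (w $ k) \<cdot>\<^sub>v unit_vec m k"
        by (intro eq_vecI) (auto simp: trunc_vec_def less_Suc_eq unit_vec_def)
      have "A *\<^sub>v trunc_vec m (Suc k) w = A *\<^sub>v trunc_vec m k w + (w $ k) \<cdot>\<^sub>v col A k"
        unfolding eq using A k
        by (simp add: mult_add_distrib_mat_vec[OF A] trunc_vec_def mult_mat_vec[OF A]
            mult_unit_vec_col)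
      then show ?case using Suc vsub_add[OF S] vsub_smult[OF S] cols k by simp
    qed
  qed
  moreover have "trunc_vec m m w = w" using w by (intro eq_vecI) (auto simp: trunc_vec_def)
  ultimately show ?thesis by (metis order_refl)
qed

lemma subspace_all:
  assumes S: "vsubspace n S" and u: "\<And>k. k < n \<Longrightarrow> unit_vec n k \<in> S"
  shows "S = carrier_vec n"
proof
  show "S \<subseteq> carrier_vec n" using S unfolding vsubspace_def by auto
  show "carrier_vec n \<subseteq> S"
  proof
    fix w :: "complex vec" assume w: "w \<in> carrier_vec n"
    have "1\<^sub>m n *\<^sub>v w \<in> S"
      by (rule mat_vec_in_subspace[OF S _ _ w]) (use u in auto)
    then show "w \<in> S" using w by simp
  qed
qed


lemma invertible_iff:
  fixes g :: "complex mat"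
  assumes g: "g \<in> carrier_mat n n"
  shows "invertible_mat g \<longleftrightarrow> (\<exists>h\<in>carrier_mat n n. g * h = 1\<^sub>m n \<and> h * g = 1\<^sub>m n)"
proof
  assume "invertible_mat g"
  then obtain h where h1: "g * h = 1\<^sub>m n" and h2: "h * g = 1\<^sub>m (dim_row h)"
    using g unfolding invertible_mat_def inverts_mat_def by auto
  have "dim_col h = n" using h1 by (metis index_mult_mat(3) index_one_mat(3))
  moreover have "dim_row h = n" using h2 g by (metis carrier_matD(2) index_mult_mat(3) index_one_mat(3))
  ultimately show "\<exists>h\<in>carrier_mat n n. g * h = 1\<^sub>m n \<and> h * g = 1\<^sub>m n" using h1 h2 by auto
next
  assume "\<exists>h\<in>carrier_mat n n. g * h = 1\<^sub>m n \<and> h * g = 1\<^sub>m n"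
  then show "invertible_mat g" using g unfolding invertible_mat_def inverts_mat_def square_mat.simps
    by (metis carrier_matD(1) carrier_matD(2))
qed

lemma invertible_one: "invertible_mat (1\<^sub>m n :: complex mat)"
  by (subst invertible_iff[of _ n]) (auto intro: bexI[of _ "1\<^sub>m n"])

lemma invertible_mult:
  fixes g g' :: "complex mat"
  assumes g: "g \<in> carrier_mat n n" and g': "g' \<in> carrier_mat n n"
    and "invertible_mat g" "invertible_mat g'"
  shows "invertible_mat (g' * g)"
proof -
  obtain h where h: "h \<in> carrier_mat n n" "g * h = 1\<^sub>m n" "h * g = 1\<^sub>m n"
    using assms invertible_iff[OF g] by auto
  obtain h' where h': "h' \<in> carrier_mat n n" "g' * h' = 1\<^sub>m n" "h' * g' = 1\<^sub>m n"
    using assms invertible_iff[OF g'] by auto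
  have e1: "g * (h * h') = h'" using g h h' by (simp add: assoc_mult_mat[of g n n h n h' n, symmetric])
  have "g' * g * (h * h') = g' * (g * (h * h'))"
    using g g' h h' by (simp add: assoc_mult_mat[of _ n n _ n _ n])
  also have "\<dots> = 1\<^sub>m n" using h h' g' e1 by simp
  finally have 1: "g' * g * (h * h') = 1\<^sub>m n" .
  have e2: "h' * (g' * g) = g" using g' g h' by (simp add: assoc_mult_mat[of h' n n g' n g n, symmetric])
  have "h * h' * (g' * g) = h * (h' * (g' * g))"
    using g g' h h' by (simp add: assoc_mult_mat[of _ n n _ n _ n])
  also have "\<dots> = 1\<^sub>m n" using h h' g e2 by simp
  finally have 2: "h * h' * (g' * g) = 1\<^sub>m n" .
  have hh: "h * h' \<in> carrier_mat n n" using h h' by simp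
  show ?thesis using 1 2 g g' hh by (subst invertible_iff[of _ n]) (simp, blast)
qed

lemma conj_B_sym:
  fixes g h B B' :: "complex mat"
  assumes c: "g \<in> carrier_mat n n" "h \<in> carrier_mat n n" "B \<in> carrier_mat n n" "B' \<in> carrier_mat n n"
    and gh: "g * h = 1\<^sub>m n" "h * g = 1\<^sub>m n" and e: "B' * g = g * B"
  shows "B * h = h * B'"
proof -
  have "h * B' = h * B' * (g * h)" using c gh by simp
  also have "\<dots> = h * (B' * g) * h" using c by (simp add: assoc_mult_mat[of _ n n _ n _ n])
  also have "\<dots> = h * (g * B) * h" using e by simp
  also have "\<dots> = (h * g) * B * h" using c by (simp add: assoc_mult_mat[of _ n n _ n _ n])
  also have "\<dots> = B * h" using c gh by simp
  finally show ?thesis by simp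
qed

lemma conj_B_eq:
  fixes g h B B' :: "complex mat"
  assumes c: "g \<in> carrier_mat n n" "h \<in> carrier_mat n n" "B \<in> carrier_mat n n" "B' \<in> carrier_mat n n"
    and gh: "g * h = 1\<^sub>m n" and e: "B' * g = g * B"
  shows "B' = g * B * h"
proof -
  have "B' = B' * (g * h)" using c gh by simp
  also have "\<dots> = (B' * g) * h" using c by (simp add: assoc_mult_mat[of _ n n _ n _ n])
  finally show ?thesis using e by simp
qed

lemma conj_I_sym:
  fixes g h I I' :: "complex mat"
  assumes c: "g \<in> carrier_mat n n" "h \<in> carrier_mat n n" "I \<in> carrier_mat n r"
    and gh: "h * g = 1\<^sub>m n" and e: "I' = g * I"
  shows "I = h * I'"
  using c gh e by (simp add: assoc_mult_mat[of _ n n _ n _ r, symmetric])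

lemma conj_J_sym:
  fixes g h J J' :: "complex mat"
  assumes c: "g \<in> carrier_mat n n" "h \<in> carrier_mat n n" "J' \<in> carrier_mat r n"
    and gh: "g * h = 1\<^sub>m n" and e: "J' * g = J"
  shows "J * h = J'"
  using c gh e by (auto simp: assoc_mult_mat[of _ r n _ n _ n])

lemma conj_B_trans:
  fixes g g' B B' B'' :: "complex mat"
  assumes c: "g \<in> carrier_mat n n" "g' \<in> carrier_mat n n" "B \<in> carrier_mat n n" "B' \<in> carrier_mat n n"
    "B'' \<in> carrier_mat n n"
    and e: "B' * g = g * B" "B'' * g' = g' * B'"
  shows "B'' * (g' * g) = (g' * g) * B"
proof -
  have "B'' * (g' * g) = (B'' * g') * g" using c by (simp add: assoc_mult_mat[of _ n n _ n _ n])
  also have "\<dots> = g' * (B' * g)" using c e by (simp add: assoc_mult_mat[of _ n n _ n _ n])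
  also have "\<dots> = (g' * g) * B" using c e by (simp add: assoc_mult_mat[of _ n n _ n _ n])
  finally show ?thesis .
qed

lemma conj_I_trans:
  fixes g g' I I' I'' :: "complex mat"
  assumes c: "g \<in> carrier_mat n n" "g' \<in> carrier_mat n n" "I \<in> carrier_mat n r"
    and e: "I' = g * I" "I'' = g' * I'"
  shows "I'' = (g' * g) * I"
  using c e by (simp add: assoc_mult_mat[of _ n n _ n _ r])

lemma conj_J_trans:
  fixes g g' J J' J'' :: "complex mat"
  assumes c: "g \<in> carrier_mat n n" "g' \<in> carrier_mat n n" "J'' \<in> carrier_mat r n"
    and e: "J' * g = J" "J'' * g' = J'"
  shows "J'' * (g' * g) = J"
  using c e by (simp add: assoc_mult_mat[of _ r n _ n _ n, symmetric])

lemma stable_transport: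
  fixes g h I I' :: "complex mat"
  assumes st: "stable_wrt r n Bs I"
    and c: "g \<in> carrier_mat n n" "h \<in> carrier_mat n n" "I \<in> carrier_mat n r"
    and gh: "g * h = 1\<^sub>m n"
    and Bs: "\<And>B. B \<in> set Bs \<Longrightarrow> B \<in> carrier_mat n n \<and> (\<exists>B'\<in>set Bs'. B' \<in> carrier_mat n n \<and> B' * g = g * B)"
    and I': "I' = g * I"
  shows "stable_wrt r n Bs' I'"
  unfolding stable_wrt_def
proof (intro allI impI)
  fix S assume asm: "vsubspace n S \<and> (\<forall>B\<in>set Bs'. \<forall>v\<in>S. B *\<^sub>v v \<in> S) \<and> (\<forall>w\<in>carrier_vec r. I' *\<^sub>v w \<in> S)"
  then have S: "vsubspace n S" by simp
  define T where "T = {v \<in> carrier_vec n. g *\<^sub>v v \<in> S}"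
  have T: "vsubspace n T" unfolding vsubspace_def T_def
    using c vsub_zero[OF S] vsub_add[OF S] vsub_smult[OF S]
    by (auto simp: mult_add_distrib_mat_vec[of g n n] mult_mat_vec[of g n n])
  have Tinv: "\<forall>B\<in>set Bs. \<forall>v\<in>T. B *\<^sub>v v \<in> T"
  proof (intro ballI)
    fix B v assume B: "B \<in> set Bs" and v: "v \<in> T"
    obtain B' where B': "B' \<in> set Bs'" "B' \<in> carrier_mat n n" "B' * g = g * B" and Bc: "B \<in> carrier_mat n n"
      using Bs[OF B] by auto
    have "g *\<^sub>v (B *\<^sub>v v) = (g * B) *\<^sub>v v" using c Bc v by (simp add: T_def assoc_mult_mat_vec)
    also have "\<dots> = (B' * g) *\<^sub>v v" using B' by simp
    also have "\<dots> = B' *\<^sub>v (g *\<^sub>v v)" using B' c v by (intro assoc_mult_mat_vec) (auto simp: T_def)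
    finally show "B *\<^sub>v v \<in> T" using asm B' v Bc by (auto simp: T_def)
  qed
  have TI: "\<forall>w\<in>carrier_vec r. I *\<^sub>v w \<in> T"
  proof
    fix w :: "complex vec" assume w: "w \<in> carrier_vec r"
    have "g *\<^sub>v (I *\<^sub>v w) = I' *\<^sub>v w" using c w I' by (simp add: assoc_mult_mat_vec)
    then show "I *\<^sub>v w \<in> T" using asm w c by (auto simp: T_def)
  qed
  have "T = carrier_vec n" using st T Tinv TI unfolding stable_wrt_def by blast
  show "S = carrier_vec n"
  proof
    show "S \<subseteq> carrier_vec n" using S unfolding vsubspace_def by auto
    show "carrier_vec n \<subseteq> S"
    proof
      fix v :: "complex vec" assume v: "v \<in> carrier_vec n"
      then have "h *\<^sub>v v \<in> T" using c \<open>T = carrier_vec n\<close> by auto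
      then have "g *\<^sub>v (h *\<^sub>v v) \<in> S" unfolding T_def by auto
      moreover have "g *\<^sub>v (h *\<^sub>v v) = v" using c gh v by (simp add: assoc_mult_mat_vec[symmetric])
      ultimately show "v \<in> S" by simp
    qed
  qed
qed

lemma stable_mono:
  assumes "stable_wrt r n Bs I" "set Bs \<subseteq> set Bs'"
  shows "stable_wrt r n Bs' I"
  using assms unfolding stable_wrt_def by blast

lemma stable_drop_B3:
  fixes B1 B2 B3 I :: "complex mat"
  assumes st: "stable_wrt r n [B1, B2, B3] I"
    and c: "B1 \<in> carrier_mat n n" "B2 \<in> carrier_mat n n" "B3 \<in> carrier_mat n n" "I \<in> carrier_mat n r"
    and comm: "B3 * B1 = B1 * B3" "B3 * B2 = B2 * B3" and BI: "B3 * I = I * shift_mat r"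
  shows "stable_wrt r n [B1, B2] I"
  unfolding stable_wrt_def
proof (intro allI impI)
  fix S assume asm: "vsubspace n S \<and> (\<forall>B\<in>set [B1,B2]. \<forall>v\<in>S. B *\<^sub>v v \<in> S) \<and> (\<forall>w\<in>carrier_vec r. I *\<^sub>v w \<in> S)"
  then have S: "vsubspace n S" by simp
  define T where "T = {v \<in> carrier_vec n. \<forall>k. (B3 ^\<^sub>m k) *\<^sub>v v \<in> S}"
  have pc: "\<And>k. B3 ^\<^sub>m k \<in> carrier_mat n n" using c by simp
  have T: "vsubspace n T" unfolding vsubspace_def T_def
    using c vsub_zero[OF S] vsub_add[OF S] vsub_smult[OF S] pc
    by (auto simp: mult_add_distrib_mat_vec[OF pc] mult_mat_vec[OF pc] mult_zero_vec_right[OF pc])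
  have comm1: "\<And>k. B3 ^\<^sub>m k * B1 = B1 * B3 ^\<^sub>m k"
  proof -
    fix k show "B3 ^\<^sub>m k * B1 = B1 * B3 ^\<^sub>m k"
    proof (induction k)
      case (Suc k)
      have "B3 ^\<^sub>m Suc k * B1 = B3 ^\<^sub>m k * (B3 * B1)" using c pc by (simp add: assoc_mult_mat[of _ n n _ n _ n])
      also have "\<dots> = (B3 ^\<^sub>m k * B1) * B3" using c pc comm by (simp add: assoc_mult_mat[of _ n n _ n _ n])
      also have "\<dots> = B1 * B3 ^\<^sub>m Suc k" using c pc Suc by (simp add: assoc_mult_mat[of _ n n _ n _ n])
      finally show ?case .
    qed (use c in simp)
  qed
  have comm2: "\<And>k. B3 ^\<^sub>m k * B2 = B2 * B3 ^\<^sub>m k"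
  proof -
    fix k show "B3 ^\<^sub>m k * B2 = B2 * B3 ^\<^sub>m k"
    proof (induction k)
      case (Suc k)
      have "B3 ^\<^sub>m Suc k * B2 = B3 ^\<^sub>m k * (B3 * B2)" using c pc by (simp add: assoc_mult_mat[of _ n n _ n _ n])
      also have "\<dots> = (B3 ^\<^sub>m k * B2) * B3" using c pc comm by (simp add: assoc_mult_mat[of _ n n _ n _ n])
      also have "\<dots> = B2 * B3 ^\<^sub>m Suc k" using c pc Suc by (simp add: assoc_mult_mat[of _ n n _ n _ n])
      finally show ?case .
    qed (use c in simp)
  qed
  have shc: "shift_mat r \<in> carrier_mat r r" by (simp add: shift_mat_def)
  have comm3: "\<And>k. B3 ^\<^sub>m k * I = I * shift_mat r ^\<^sub>m k"
  proof -
    fix k show "B3 ^\<^sub>m k * I = I * shift_mat r ^\<^sub>m k"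
    proof (induction k)
      case (Suc k)
      have "B3 ^\<^sub>m Suc k * I = B3 ^\<^sub>m k * (B3 * I)" using c pc by (simp add: assoc_mult_mat[of _ n n _ n _ r])
      also have "\<dots> = (B3 ^\<^sub>m k * I) * shift_mat r" using c pc BI shc by (simp add: assoc_mult_mat[of _ n n _ r _ r])
      also have "\<dots> = I * shift_mat r ^\<^sub>m Suc k" using c pc Suc shc by (simp add: assoc_mult_mat[of _ n r _ r _ r])
      finally show ?case .
    qed (use c shc in simp)
  qed
  have Tinv: "\<forall>B\<in>set [B1, B2, B3]. \<forall>v\<in>T. B *\<^sub>v v \<in> T"
  proof (intro ballI)
    fix B v assume B: "B \<in> set [B1, B2, B3]" and v: "v \<in> T"
    then have vc: "v \<in> carrier_vec n" by (simp add: T_def)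
    show "B *\<^sub>v v \<in> T"
    proof (cases "B = B3")
      case True
      have "\<And>k. B3 ^\<^sub>m k *\<^sub>v (B3 *\<^sub>v v) = B3 ^\<^sub>m (Suc k) *\<^sub>v v"
        using pc c vc by (simp add: assoc_mult_mat_vec[of _ n n _ n, symmetric])
      have "\<forall>k. B3 ^\<^sub>m k *\<^sub>v (B3 *\<^sub>v v) \<in> S"
      proof
        fix k
        have "B3 ^\<^sub>m (Suc k) *\<^sub>v v \<in> S" using v unfolding T_def by blast
        then show "B3 ^\<^sub>m k *\<^sub>v (B3 *\<^sub>v v) \<in> S" using pc c vc
          by (simp add: assoc_mult_mat_vec[of _ n n _ n, symmetric])
      qed
      then show ?thesis using True vc c by (auto simp: T_def)
    next
      case False
      then have B12: "B = B1 \<or> B = B2" using B by auto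
      then have Bc: "B \<in> carrier_mat n n" using c by auto
      have "\<And>k. B3 ^\<^sub>m k *\<^sub>v (B *\<^sub>v v) = B *\<^sub>v (B3 ^\<^sub>m k *\<^sub>v v)"
        using B12 comm1 comm2 pc Bc vc by (metis assoc_mult_mat_vec)
      then show ?thesis using asm B12 v Bc by (auto simp: T_def)
    qed
  qed
  have TI: "\<forall>w\<in>carrier_vec r. I *\<^sub>v w \<in> T"
  proof
    fix w :: "complex vec" assume w: "w \<in> carrier_vec r"
    have "\<And>k. B3 ^\<^sub>m k *\<^sub>v (I *\<^sub>v w) = I *\<^sub>v (shift_mat r ^\<^sub>m k *\<^sub>v w)"
      using comm3 pc c w shc by (metis assoc_mult_mat_vec pow_carrier_mat)
    moreover have "\<And>k. shift_mat r ^\<^sub>m k *\<^sub>v w \<in> carrier_vec r" using shc w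
      by (metis mult_mat_vec_carrier pow_carrier_mat)
    ultimately show "I *\<^sub>v w \<in> T" using asm w c shc by (auto simp: T_def)
  qed
  have "T = carrier_vec n" using st T Tinv TI unfolding stable_wrt_def by blast
  show "S = carrier_vec n"
  proof
    show "S \<subseteq> carrier_vec n" using S unfolding vsubspace_def by auto
    show "carrier_vec n \<subseteq> S"
    proof
      fix v :: "complex vec" assume "v \<in> carrier_vec n"
      then have "v \<in> T" using \<open>T = carrier_vec n\<close> by simp
      then have "B3 ^\<^sub>m 0 *\<^sub>v v \<in> S" unfolding T_def by blast
      then show "v \<in> S" using c \<open>v \<in> carrier_vec n\<close> by simp
    qed
  qed
qed


lemma rel_iff:
  fixes B1 B2 I J :: "complex mat"
  assumes c: "B1 \<in> carrier_mat n n" "B2 \<in> carrier_mat n n" "I \<in> carrier_mat n r" "J \<in> carrier_mat r n"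
  shows "B1 * B2 - B2 * B1 + I * J = 0\<^sub>m n n \<longleftrightarrow> B1 * B2 + I * J = B2 * B1"
proof
  assume h: "B1 * B2 - B2 * B1 + I * J = 0\<^sub>m n n"
  show "B1 * B2 + I * J = B2 * B1"
  proof (rule eq_matI)
    fix i j assume ij: "i < dim_row (B2 * B1)" "j < dim_col (B2 * B1)"
    then have "(B1 * B2 - B2 * B1 + I * J) $$ (i,j) = 0" using h c by simp
    then show "(B1 * B2 + I * J) $$ (i, j) = (B2 * B1) $$ (i, j)" using ij c by (simp add: algebra_simps)
  qed (use c in auto)
next
  assume h: "B1 * B2 + I * J = B2 * B1"
  show "B1 * B2 - B2 * B1 + I * J = 0\<^sub>m n n"
  proof (rule eq_matI)
    fix i j assume ij: "i < dim_row (0\<^sub>m n n :: complex mat)" "j < dim_col (0\<^sub>m n n :: complex mat)"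
    then have "(B1 * B2 + I * J) $$ (i,j) = (B2 * B1) $$ (i,j)" using h by simp
    then show "(B1 * B2 - B2 * B1 + I * J) $$ (i, j) = 0\<^sub>m n n $$ (i, j)" using ij c by (simp add: algebra_simps)
  qed (use c in auto)
qed

lemma conj_mult:
  fixes g h X Y :: "complex mat"
  assumes c: "g \<in> carrier_mat n n" "h \<in> carrier_mat n n" "X \<in> carrier_mat n n" "Y \<in> carrier_mat n n"
    and hg: "h * g = 1\<^sub>m n"
  shows "(g * X * h) * (g * Y * h) = g * (X * Y) * h"
proof -
  have "(g * X * h) * (g * Y * h) = g * X * (h * g) * Y * h"
    using c by (simp add: assoc_mult_mat[of _ n n _ n _ n])
  also have "\<dots> = g * (X * Y) * h" using c hg by (simp add: assoc_mult_mat[of _ n n _ n _ n])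
  finally show ?thesis .
qed

definition adhm_carr :: "nat \<Rightarrow> nat \<Rightarrow> adhm \<Rightarrow> bool" where
  "adhm_carr r n x \<longleftrightarrow> (case x of (B1,B2,I,J) \<Rightarrow>
     B1 \<in> carrier_mat n n \<and> B2 \<in> carrier_mat n n \<and> I \<in> carrier_mat n r \<and> J \<in> carrier_mat r n)"

definition cyc_carr :: "nat \<Rightarrow> nat \<Rightarrow> cycrep \<Rightarrow> bool" where
  "cyc_carr r n x \<longleftrightarrow> (case x of (B1,B2,B3,I,J) \<Rightarrow>
     B1 \<in> carrier_mat n n \<and> B2 \<in> carrier_mat n n \<and> B3 \<in> carrier_mat n n \<and>
     I \<in> carrier_mat n r \<and> J \<in> carrier_mat r n)"

lemma adhm_data_carr: "adhm_data r n x \<Longrightarrow> adhm_carr r n x"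
  unfolding adhm_data_def adhm_carr_def by (auto split: prod.splits)

lemma cyc_data_carr: "cyc_data r n x \<Longrightarrow> cyc_carr r n x"
  unfolding cyc_data_def cyc_carr_def by (auto split: prod.splits)

lemma adhm_equiv_refl:
  assumes "adhm_carr r n x" shows "adhm_equiv n x x"
  using assms unfolding adhm_equiv_def adhm_carr_def
  by (auto split: prod.splits intro!: bexI[of _ "1\<^sub>m n"] simp: invertible_one)

lemma cyc_equiv_refl:
  assumes "cyc_carr r n x" shows "cyc_equiv n x x"
  using assms unfolding cyc_equiv_def cyc_carr_def
  by (auto split: prod.splits intro!: bexI[of _ "1\<^sub>m n"] simp: invertible_one)

lemma adhm_equiv_sym:
  assumes cx: "adhm_carr r n x" and cy: "adhm_carr r n y" and e: "adhm_equiv n x y"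
  shows "adhm_equiv n y x"
proof -
  obtain B1 B2 I J where x: "x = (B1,B2,I,J)" by (cases x) auto
  obtain B1' B2' I' J' where y: "y = (B1',B2',I',J')" by (cases y) auto
  from e obtain g where g: "g \<in> carrier_mat n n" "invertible_mat g" "B1' * g = g * B1" "B2' * g = g * B2"
    "I' = g * I" "J' * g = J" unfolding adhm_equiv_def x y by auto
  obtain h where h: "h \<in> carrier_mat n n" "g * h = 1\<^sub>m n" "h * g = 1\<^sub>m n"
    using g invertible_iff[OF g(1)] by auto
  have hi: "invertible_mat h" using h g(1) by (subst invertible_iff[OF h(1)]) auto
  have c: "B1 \<in> carrier_mat n n" "B2 \<in> carrier_mat n n" "I \<in> carrier_mat n r" "J \<in> carrier_mat r n"
    "B1' \<in> carrier_mat n n" "B2' \<in> carrier_mat n n" "I' \<in> carrier_mat n r" "J' \<in> carrier_mat r n"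
    using cx cy unfolding x y adhm_carr_def by auto
  show ?thesis unfolding adhm_equiv_def x y
    using conj_B_sym[OF g(1) h(1) c(1) c(5) h(2,3) g(3)] conj_B_sym[OF g(1) h(1) c(2) c(6) h(2,3) g(4)]
      conj_I_sym[OF g(1) h(1) c(3) h(3) g(5)] conj_J_sym[OF g(1) h(1) c(8) h(2) g(6)] h(1) hi
    by auto
qed

lemma cyc_equiv_sym:
  assumes cx: "cyc_carr r n x" and cy: "cyc_carr r n y" and e: "cyc_equiv n x y"
  shows "cyc_equiv n y x"
proof -
  obtain B1 B2 B3 I J where x: "x = (B1,B2,B3,I,J)" by (cases x) auto
  obtain B1' B2' B3' I' J' where y: "y = (B1',B2',B3',I',J')" by (cases y) auto
  from e obtain g where g: "g \<in> carrier_mat n n" "invertible_mat g" "B1' * g = g * B1" "B2' * g = g * B2"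
    "B3' * g = g * B3" "I' = g * I" "J' * g = J" unfolding cyc_equiv_def x y by auto
  obtain h where h: "h \<in> carrier_mat n n" "g * h = 1\<^sub>m n" "h * g = 1\<^sub>m n"
    using g invertible_iff[OF g(1)] by auto
  have hi: "invertible_mat h" using h g(1) by (subst invertible_iff[OF h(1)]) auto
  have c: "B1 \<in> carrier_mat n n" "B2 \<in> carrier_mat n n" "B3 \<in> carrier_mat n n" "I \<in> carrier_mat n r" "J \<in> carrier_mat r n"
    "B1' \<in> carrier_mat n n" "B2' \<in> carrier_mat n n" "B3' \<in> carrier_mat n n" "I' \<in> carrier_mat n r" "J' \<in> carrier_mat r n"
    using cx cy unfolding x y cyc_carr_def by auto
  show ?thesis unfolding cyc_equiv_def x y
    using conj_B_sym[OF g(1) h(1) c(1) c(6) h(2,3) g(3)] conj_B_sym[OF g(1) h(1) c(2) c(7) h(2,3) g(4)]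
      conj_B_sym[OF g(1) h(1) c(3) c(8) h(2,3) g(5)]
      conj_I_sym[OF g(1) h(1) c(4) h(3) g(6)] conj_J_sym[OF g(1) h(1) c(10) h(2) g(7)] h(1) hi
    by auto
qed

lemma adhm_equiv_trans:
  assumes cx: "adhm_carr r n x" and cy: "adhm_carr r n y" and cz: "adhm_carr r n z"
    and e1: "adhm_equiv n x y" and e2: "adhm_equiv n y z"
  shows "adhm_equiv n x z"
proof -
  obtain B1 B2 I J where x: "x = (B1,B2,I,J)" by (cases x) auto
  obtain B1' B2' I' J' where y: "y = (B1',B2',I',J')" by (cases y) auto
  obtain B1'' B2'' I'' J'' where z: "z = (B1'',B2'',I'',J'')" by (cases z) auto
  from e1 obtain g where g: "g \<in> carrier_mat n n" "invertible_mat g" "B1' * g = g * B1" "B2' * g = g * B2"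
    "I' = g * I" "J' * g = J" unfolding adhm_equiv_def x y by auto
  from e2 obtain g' where g': "g' \<in> carrier_mat n n" "invertible_mat g'" "B1'' * g' = g' * B1'" "B2'' * g' = g' * B2'"
    "I'' = g' * I'" "J'' * g' = J'" unfolding adhm_equiv_def y z by auto
  have c: "B1 \<in> carrier_mat n n" "B2 \<in> carrier_mat n n" "I \<in> carrier_mat n r" "J \<in> carrier_mat r n"
    "B1' \<in> carrier_mat n n" "B2' \<in> carrier_mat n n" "I' \<in> carrier_mat n r" "J' \<in> carrier_mat r n"
    "B1'' \<in> carrier_mat n n" "B2'' \<in> carrier_mat n n" "I'' \<in> carrier_mat n r" "J'' \<in> carrier_mat r n"
    using cx cy cz unfolding x y z adhm_carr_def by auto
  show ?thesis unfolding adhm_equiv_def x z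
    using conj_B_trans[OF g(1) g'(1) c(1) c(5) c(9) g(3) g'(3)]
      conj_B_trans[OF g(1) g'(1) c(2) c(6) c(10) g(4) g'(4)]
      conj_I_trans[OF g(1) g'(1) c(3) g(5) g'(5)]
      conj_J_trans[OF g(1) g'(1) c(12) g(6) g'(6)]
      invertible_mult[OF g(1) g'(1) g(2) g'(2)] g(1) g'(1)
    by (auto intro!: bexI[of _ "g' * g"])
qed

lemma cyc_equiv_trans:
  assumes cx: "cyc_carr r n x" and cy: "cyc_carr r n y" and cz: "cyc_carr r n z"
    and e1: "cyc_equiv n x y" and e2: "cyc_equiv n y z"
  shows "cyc_equiv n x z"
proof -
  obtain B1 B2 B3 I J where x: "x = (B1,B2,B3,I,J)" by (cases x) auto
  obtain B1' B2' B3' I' J' where y: "y = (B1',B2',B3',I',J')" by (cases y) auto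
  obtain B1'' B2'' B3'' I'' J'' where z: "z = (B1'',B2'',B3'',I'',J'')" by (cases z) auto
  from e1 obtain g where g: "g \<in> carrier_mat n n" "invertible_mat g" "B1' * g = g * B1" "B2' * g = g * B2"
    "B3' * g = g * B3" "I' = g * I" "J' * g = J" unfolding cyc_equiv_def x y by auto
  from e2 obtain g' where g': "g' \<in> carrier_mat n n" "invertible_mat g'" "B1'' * g' = g' * B1'" "B2'' * g' = g' * B2'"
    "B3'' * g' = g' * B3'" "I'' = g' * I'" "J'' * g' = J'" unfolding cyc_equiv_def y z by auto
  have c: "B1 \<in> carrier_mat n n" "B2 \<in> carrier_mat n n" "B3 \<in> carrier_mat n n" "I \<in> carrier_mat n r" "J \<in> carrier_mat r n"
    "B1' \<in> carrier_mat n n" "B2' \<in> carrier_mat n n" "B3' \<in> carrier_mat n n" "I' \<in> carrier_mat n r" "J' \<in> carrier_mat r n"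
    "B1'' \<in> carrier_mat n n" "B2'' \<in> carrier_mat n n" "B3'' \<in> carrier_mat n n" "I'' \<in> carrier_mat n r" "J'' \<in> carrier_mat r n"
    using cx cy cz unfolding x y z cyc_carr_def by auto
  show ?thesis unfolding cyc_equiv_def x z
    using conj_B_trans[OF g(1) g'(1) c(1) c(6) c(11) g(3) g'(3)]
      conj_B_trans[OF g(1) g'(1) c(2) c(7) c(12) g(4) g'(4)]
      conj_B_trans[OF g(1) g'(1) c(3) c(8) c(13) g(5) g'(5)]
      conj_I_trans[OF g(1) g'(1) c(4) g(6) g'(6)]
      conj_J_trans[OF g(1) g'(1) c(15) g(7) g'(7)]
      invertible_mult[OF g(1) g'(1) g(2) g'(2)] g(1) g'(1)
    by (auto intro!: bexI[of _ "g' * g"])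
qed

lemma adhm_data_transport:
  assumes dx: "adhm_data r n x" and cy: "adhm_carr r n y" and e: "adhm_equiv n x y"
  shows "adhm_data r n y"
proof -
  obtain B1 B2 I J where x: "x = (B1,B2,I,J)" by (cases x) auto
  obtain B1' B2' I' J' where y: "y = (B1',B2',I',J')" by (cases y) auto
  from e obtain g where g: "g \<in> carrier_mat n n" "invertible_mat g" "B1' * g = g * B1" "B2' * g = g * B2"
    "I' = g * I" "J' * g = J" unfolding adhm_equiv_def x y by auto
  obtain h where h: "h \<in> carrier_mat n n" "g * h = 1\<^sub>m n" "h * g = 1\<^sub>m n"
    using g invertible_iff[OF g(1)] by auto
  have c: "B1 \<in> carrier_mat n n" "B2 \<in> carrier_mat n n" "I \<in> carrier_mat n r" "J \<in> carrier_mat r n"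
    "B1' \<in> carrier_mat n n" "B2' \<in> carrier_mat n n" "I' \<in> carrier_mat n r" "J' \<in> carrier_mat r n"
    using dx cy unfolding x y adhm_carr_def adhm_data_def by auto
  have rel: "B1 * B2 + I * J = B2 * B1" using dx c unfolding x adhm_data_def by (simp add: rel_iff)
  have st: "stable_wrt r n [B1, B2] I" using dx unfolding x adhm_data_def by simp
  have e1: "B1' = g * B1 * h" by (rule conj_B_eq[OF g(1) h(1) c(1) c(5) h(2) g(3)])
  have e2: "B2' = g * B2 * h" by (rule conj_B_eq[OF g(1) h(1) c(2) c(6) h(2) g(4)])
  have e4: "J' = J * h" using conj_J_sym[OF g(1) h(1) c(8) h(2) g(6)] by simp
  have "B1' * B2' + I' * J' = g * (B1 * B2) * h + g * (I * J) * h"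
    unfolding e1 e2 e4 g(5) using conj_mult[OF g(1) h(1) c(1) c(2) h(3)] c g(1) h(1)
    by (simp add: assoc_mult_mat[of _ n n _ n _ n] assoc_mult_mat[of _ n n _ r _ n] assoc_mult_mat[of _ n r _ n _ n])
  also have "\<dots> = g * (B1 * B2 + I * J) * h" using c g(1) h(1)
    by (simp add: mult_add_distrib_mat[of _ n n _ n] add_mult_distrib_mat[of _ n n _ _ n])
  also have "\<dots> = B2' * B1'" unfolding rel e1 e2 using conj_mult[OF g(1) h(1) c(2) c(1) h(3)] by simp
  finally have rel': "B1' * B2' - B2' * B1' + I' * J' = 0\<^sub>m n n" using c by (simp add: rel_iff)
  have st': "stable_wrt r n [B1', B2'] I'"
    by (rule stable_transport[OF st g(1) h(1) c(3) h(2)]) (use c g in auto)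
  show ?thesis unfolding adhm_data_def y using c rel' st' by simp
qed

lemma cyc_data_transport:
  assumes dx: "cyc_data r n x" and cy: "cyc_carr r n y" and e: "cyc_equiv n x y"
  shows "cyc_data r n y"
proof -
  obtain B1 B2 B3 I J where x: "x = (B1,B2,B3,I,J)" by (cases x) auto
  obtain B1' B2' B3' I' J' where y: "y = (B1',B2',B3',I',J')" by (cases y) auto
  from e obtain g where g: "g \<in> carrier_mat n n" "invertible_mat g" "B1' * g = g * B1" "B2' * g = g * B2"
    "B3' * g = g * B3" "I' = g * I" "J' * g = J" unfolding cyc_equiv_def x y by auto
  obtain h where h: "h \<in> carrier_mat n n" "g * h = 1\<^sub>m n" "h * g = 1\<^sub>m n"
    using g invertible_iff[OF g(1)] by auto
  have c: "B1 \<in> carrier_mat n n" "B2 \<in> carrier_mat n n" "B3 \<in> carrier_mat n n" "I \<in> carrier_mat n r" "J \<in> carrier_mat r n"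
    "B1' \<in> carrier_mat n n" "B2' \<in> carrier_mat n n" "B3' \<in> carrier_mat n n" "I' \<in> carrier_mat n r" "J' \<in> carrier_mat r n"
    using dx cy unfolding x y cyc_carr_def cyc_data_def by auto
  have shc: "shift_mat r \<in> carrier_mat r r" by (simp add: shift_mat_def)
  have rel: "B1 * B2 + I * J = B2 * B1" using dx c unfolding x cyc_data_def by (simp add: rel_iff)
  have r2: "J * B3 = shift_mat r * J" "B3 * I = I * shift_mat r" "B3 * B1 = B1 * B3" "B3 * B2 = B2 * B3"
    using dx unfolding x cyc_data_def by auto
  have st: "stable_wrt r n [B1, B2, B3] I" using dx unfolding x cyc_data_def by simp
  have e1: "B1' = g * B1 * h" by (rule conj_B_eq[OF g(1) h(1) c(1) c(6) h(2) g(3)])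
  have e2: "B2' = g * B2 * h" by (rule conj_B_eq[OF g(1) h(1) c(2) c(7) h(2) g(4)])
  have e3: "B3' = g * B3 * h" by (rule conj_B_eq[OF g(1) h(1) c(3) c(8) h(2) g(5)])
  have e4: "J' = J * h" using conj_J_sym[OF g(1) h(1) c(10) h(2) g(7)] by simp
  have "B1' * B2' + I' * J' = g * (B1 * B2) * h + g * (I * J) * h"
    unfolding e1 e2 e4 g(6) using conj_mult[OF g(1) h(1) c(1) c(2) h(3)] c g(1) h(1)
    by (simp add: assoc_mult_mat[of _ n n _ n _ n] assoc_mult_mat[of _ n n _ r _ n] assoc_mult_mat[of _ n r _ n _ n])
  also have "\<dots> = g * (B1 * B2 + I * J) * h" using c g(1) h(1)
    by (simp add: mult_add_distrib_mat[of _ n n _ n] add_mult_distrib_mat[of _ n n _ _ n])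
  also have "\<dots> = B2' * B1'" unfolding rel e1 e2 using conj_mult[OF g(1) h(1) c(2) c(1) h(3)] by simp
  finally have rel': "B1' * B2' - B2' * B1' + I' * J' = 0\<^sub>m n n" using c by (simp add: rel_iff)
  have s1: "J' * B3' = shift_mat r * J'"
  proof -
    have "J' * B3' = J * (h * g) * B3 * h" unfolding e4 e3 using c g(1) h(1)
      by (simp add: assoc_mult_mat[of _ r n _ n _ n] assoc_mult_mat[of _ n n _ n _ n])
    also have "\<dots> = (J * B3) * h" using h(3) c by simp
    also have "\<dots> = shift_mat r * J'" unfolding r2(1) e4 using c shc h(1)
      by (simp add: assoc_mult_mat[of _ r r _ n _ n])
    finally show ?thesis .
  qed
  have s2: "B3' * I' = I' * shift_mat r"
  proof -
    have "B3' * I' = g * B3 * (h * g) * I" unfolding e3 g(6) using c g(1) h(1)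
      by (simp add: assoc_mult_mat[of _ n n _ n _ r] assoc_mult_mat[of _ n n _ n _ n])
    also have "\<dots> = g * (B3 * I)" using h(3) c g(1) by (simp add: assoc_mult_mat[of _ n n _ n _ r])
    also have "\<dots> = I' * shift_mat r" unfolding r2(2) g(6) using c shc g(1)
      by (simp add: assoc_mult_mat[of _ n n _ r _ r])
    finally show ?thesis .
  qed
  have s3: "B3' * B1' = B1' * B3'" unfolding e1 e3
    using conj_mult[OF g(1) h(1) c(3) c(1) h(3)] conj_mult[OF g(1) h(1) c(1) c(3) h(3)] r2(3) by simp
  have s4: "B3' * B2' = B2' * B3'" unfolding e2 e3
    using conj_mult[OF g(1) h(1) c(3) c(2) h(3)] conj_mult[OF g(1) h(1) c(2) c(3) h(3)] r2(4) by simp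
  have st': "stable_wrt r n [B1', B2', B3'] I'"
    by (rule stable_transport[OF st g(1) h(1) c(4) h(2)]) (use c g in auto)
  show ?thesis unfolding cyc_data_def y using c rel' st' s1 s2 s3 s4 by simp
qed

lemma adhm_class_eq:
  assumes "adhm_data r n x" "adhm_data r n y" "adhm_equiv n x y"
  shows "adhm_class r n x = adhm_class r n y"
  using assms adhm_equiv_sym adhm_equiv_trans adhm_data_carr unfolding adhm_class_def by blast

lemma cyc_class_eq:
  assumes "cyc_data r n x" "cyc_data r n y" "cyc_equiv n x y"
  shows "cyc_class r n x = cyc_class r n y"
  using assms cyc_equiv_sym cyc_equiv_trans cyc_data_carr unfolding cyc_class_def by blast

lemma adhm_class_self: "adhm_data r n x \<Longrightarrow> x \<in> adhm_class r n x"
  unfolding adhm_class_def using adhm_equiv_refl adhm_data_carr by blast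

lemma cyc_class_self: "cyc_data r n x \<Longrightarrow> x \<in> cyc_class r n x"
  unfolding cyc_class_def using cyc_equiv_refl cyc_data_carr by blast


definition dmat :: "nat \<Rightarrow> (nat \<Rightarrow> complex) \<Rightarrow> complex mat" where
  "dmat r f = mat r r (\<lambda>(i,j). if i = j then f i else 0)"

lemma dmat_carrier[simp]: "dmat r f \<in> carrier_mat r r"
  by (simp add: dmat_def)

lemma mult_diag_right:
  assumes I: "I \<in> carrier_mat n r"
  shows "I * dmat r f = mat n r (\<lambda>(k,a). I $$ (k,a) * f a)"
proof (rule eq_matI)
  fix k a assume ka: "k < dim_row (mat n r (\<lambda>(k,a). I $$ (k,a) * f a))" "a < dim_col (mat n r (\<lambda>(k,a). I $$ (k,a) * f a))"
  then have ka': "k < n" "a < r" by auto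
  have "(I * dmat r f) $$ (k,a) = (\<Sum>b\<in>{0..<r}. I $$ (k,b) * (if b = a then f a else 0))"
    using I ka' by (auto simp: dmat_def scalar_prod_def intro!: sum.cong)
  also have "\<dots> = (\<Sum>b\<in>{0..<r}. if b = a then I $$ (k,a) * f a else 0)" by (rule sum.cong) auto
  also have "\<dots> = I $$ (k,a) * f a" using ka' by simp
  finally show "(I * dmat r f) $$ (k,a) = mat n r (\<lambda>(k,a). I $$ (k,a) * f a) $$ (k,a)" using ka' by simp
qed (use I in \<open>auto simp: dmat_def\<close>)

lemma mult_diag_left:
  assumes J: "J \<in> carrier_mat r n"
  shows "dmat r f * J = mat r n (\<lambda>(a,k). f a * J $$ (a,k))"
proof (rule eq_matI)
  fix a k assume ka: "a < dim_row (mat r n (\<lambda>(a,k). f a * J $$ (a,k)))" "k < dim_col (mat r n (\<lambda>(a,k). f a * J $$ (a,k)))"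
  then have ka': "k < n" "a < r" by auto
  have "(dmat r f * J) $$ (a,k) = (\<Sum>b\<in>{0..<r}. (if a = b then f a else 0) * J $$ (b,k))"
    using J ka' by (auto simp: dmat_def scalar_prod_def intro!: sum.cong)
  also have "\<dots> = (\<Sum>b\<in>{0..<r}. if b = a then f a * J $$ (a,k) else 0)" by (rule sum.cong) auto
  also have "\<dots> = f a * J $$ (a,k)" using ka' by simp
  finally show "(dmat r f * J) $$ (a,k) = mat r n (\<lambda>(a,k). f a * J $$ (a,k)) $$ (a,k)" using ka' by simp
qed (use J in \<open>auto simp: dmat_def\<close>)

lemma adhm_act_mat:
  assumes "I \<in> carrier_mat n r" "J \<in> carrier_mat r n"
  shows "adhm_act r n (t1,t2,u) (B1,B2,I,J) =
    (t1 \<cdot>\<^sub>m B1, t2 \<cdot>\<^sub>m B2, I * dmat r (\<lambda>a. inverse (u a)), dmat r (\<lambda>a. t1 * t2 * u a) * J)"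
  using assms by (simp add: adhm_act_def mult_diag_right mult_diag_left)

lemma cyc_act_mat:
  assumes "I \<in> carrier_mat n r" "J \<in> carrier_mat r n"
  shows "cyc_act r n t1 t2 t3 (B1,B2,B3,I,J) =
    (t1 \<cdot>\<^sub>m B1, t2 \<cdot>\<^sub>m B2, t3 \<cdot>\<^sub>m B3, I * dmat r (\<lambda>a. t3 ^ a),
     dmat r (\<lambda>a. t1 * t2 * inverse (t3 ^ a)) * J)"
  using assms by (simp add: cyc_act_def mult_diag_right mult_diag_left mult.commute)

lemma adhm_act_carr:
  assumes "adhm_carr r n x" shows "adhm_carr r n (adhm_act r n t x)"
  using assms unfolding adhm_carr_def adhm_act_def by (auto split: prod.splits)

lemma cyc_act_carr:
  assumes "cyc_carr r n x" shows "cyc_carr r n (cyc_act r n t1 t2 t3 x)"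
  using assms unfolding cyc_carr_def cyc_act_def by (auto split: prod.splits)

lemma smult_conj:
  fixes g B B' :: "complex mat"
  assumes "g \<in> carrier_mat n n" "B \<in> carrier_mat n n" "B' \<in> carrier_mat n n" "B' * g = g * B"
  shows "(t \<cdot>\<^sub>m B') * g = g * (t \<cdot>\<^sub>m B)"
  using assms by (simp add: mult_smult_assoc_mat[of _ n n _ n] mult_smult_distrib[of _ n n _ n])

lemma adhm_act_equiv:
  assumes cx: "adhm_carr r n x" and cy: "adhm_carr r n y" and e: "adhm_equiv n x y"
  shows "adhm_equiv n (adhm_act r n t x) (adhm_act r n t y)"
proof -
  obtain B1 B2 I J where x: "x = (B1,B2,I,J)" by (cases x) auto
  obtain B1' B2' I' J' where y: "y = (B1',B2',I',J')" by (cases y) auto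
  obtain t1 t2 u where t: "t = (t1,t2,u)" by (cases t) auto
  from e obtain g where g: "g \<in> carrier_mat n n" "invertible_mat g" "B1' * g = g * B1" "B2' * g = g * B2"
    "I' = g * I" "J' * g = J" unfolding adhm_equiv_def x y by auto
  have c: "B1 \<in> carrier_mat n n" "B2 \<in> carrier_mat n n" "I \<in> carrier_mat n r" "J \<in> carrier_mat r n"
    "B1' \<in> carrier_mat n n" "B2' \<in> carrier_mat n n" "I' \<in> carrier_mat n r" "J' \<in> carrier_mat r n"
    using cx cy unfolding x y adhm_carr_def by auto
  let ?Du = "dmat r (\<lambda>a. inverse (u a))" and ?Dv = "dmat r (\<lambda>a. t1 * t2 * u a)"
  have 1: "I' * ?Du = g * (I * ?Du)" using g c by (simp add: assoc_mult_mat[of _ n n _ r _ r])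
  have 2: "(?Dv * J') * g = ?Dv * J" using g c by (simp add: assoc_mult_mat[of _ r r _ n _ n])
  show ?thesis unfolding x y t using c
    by (simp add: adhm_act_mat adhm_equiv_def)
       (use g 1 2 smult_conj[OF g(1) c(1) c(5) g(3)] smult_conj[OF g(1) c(2) c(6) g(4)] in blast)
qed

lemma cyc_act_equiv:
  assumes cx: "cyc_carr r n x" and cy: "cyc_carr r n y" and e: "cyc_equiv n x y"
  shows "cyc_equiv n (cyc_act r n t1 t2 t3 x) (cyc_act r n t1 t2 t3 y)"
proof -
  obtain B1 B2 B3 I J where x: "x = (B1,B2,B3,I,J)" by (cases x) auto
  obtain B1' B2' B3' I' J' where y: "y = (B1',B2',B3',I',J')" by (cases y) auto
  from e obtain g where g: "g \<in> carrier_mat n n" "invertible_mat g" "B1' * g = g * B1" "B2' * g = g * B2"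
    "B3' * g = g * B3" "I' = g * I" "J' * g = J" unfolding cyc_equiv_def x y by auto
  have c: "B1 \<in> carrier_mat n n" "B2 \<in> carrier_mat n n" "B3 \<in> carrier_mat n n" "I \<in> carrier_mat n r" "J \<in> carrier_mat r n"
    "B1' \<in> carrier_mat n n" "B2' \<in> carrier_mat n n" "B3' \<in> carrier_mat n n" "I' \<in> carrier_mat n r" "J' \<in> carrier_mat r n"
    using cx cy unfolding x y cyc_carr_def by auto
  let ?Du = "dmat r (\<lambda>a. t3 ^ a)" and ?Dv = "dmat r (\<lambda>a. t1 * t2 * inverse (t3 ^ a))"
  have 1: "I' * ?Du = g * (I * ?Du)" using g c by (simp add: assoc_mult_mat[of _ n n _ r _ r])
  have 2: "(?Dv * J') * g = ?Dv * J" using g c by (simp add: assoc_mult_mat[of _ r r _ n _ n])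
  show ?thesis unfolding x y using c
    by (simp add: cyc_act_mat cyc_equiv_def)
       (use g 1 2 smult_conj[OF g(1) c(1) c(6) g(3)] smult_conj[OF g(1) c(2) c(7) g(4)]
         smult_conj[OF g(1) c(3) c(8) g(5)] in blast)
qed

lemma adhm_act_inv:
  assumes cx: "adhm_carr r n x" and t: "(t1,t2,u) \<in> big_torus r"
  shows "adhm_act r n (t1,t2,u) (adhm_act r n (inverse t1, inverse t2, \<lambda>a. inverse (u a)) x) = x"
proof -
  obtain B1 B2 I J where x: "x = (B1,B2,I,J)" by (cases x) auto
  have c: "B1 \<in> carrier_mat n n" "B2 \<in> carrier_mat n n" "I \<in> carrier_mat n r" "J \<in> carrier_mat r n"
    using cx unfolding x adhm_carr_def by auto
  have t': "t1 \<noteq> 0" "t2 \<noteq> 0" "\<And>a. a < r \<Longrightarrow> u a \<noteq> 0" using t by (auto simp: big_torus_def)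
  have 1: "t1 \<cdot>\<^sub>m (inverse t1 \<cdot>\<^sub>m B1) = B1" using t' c by (intro eq_matI) auto
  have 2: "t2 \<cdot>\<^sub>m (inverse t2 \<cdot>\<^sub>m B2) = B2" using t' c by (intro eq_matI) auto
  have 3: "mat n r (\<lambda>(k, a). mat n r (\<lambda>(k, a). I $$ (k, a) * inverse (inverse (u a))) $$ (k, a) * inverse (u a)) = I"
    using t' c by (intro eq_matI) auto
  have 4: "mat r n (\<lambda>(a, k). t1 * t2 * u a * mat r n (\<lambda>(a, k). inverse t1 * inverse t2 * inverse (u a) * J $$ (a, k)) $$ (a, k)) = J"
    using t' c by (intro eq_matI) (auto simp: field_simps)
  show ?thesis unfolding x adhm_act_def using 1 2 3 4 by simp
qed

lemma cyc_act_inv: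
  assumes cx: "cyc_carr r n x" and t: "t1 \<noteq> 0" "t2 \<noteq> 0" "t3 \<noteq> 0"
  shows "cyc_act r n t1 t2 t3 (cyc_act r n (inverse t1) (inverse t2) (inverse t3) x) = x"
proof -
  obtain B1 B2 B3 I J where x: "x = (B1,B2,B3,I,J)" by (cases x) auto
  have c: "B1 \<in> carrier_mat n n" "B2 \<in> carrier_mat n n" "B3 \<in> carrier_mat n n" "I \<in> carrier_mat n r" "J \<in> carrier_mat r n"
    using cx unfolding x cyc_carr_def by auto
  have 1: "\<And>(t::complex) (B::complex mat). t \<noteq> 0 \<Longrightarrow> B \<in> carrier_mat n n \<Longrightarrow> t \<cdot>\<^sub>m (inverse t \<cdot>\<^sub>m B) = B" by (intro eq_matI) (auto simp: field_simps)
  have 3: "mat n r (\<lambda>(k, a). t3 ^ a * mat n r (\<lambda>(k, a). inverse t3 ^ a * I $$ (k, a)) $$ (k, a)) = I"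
    using t c by (intro eq_matI) (auto simp: power_inverse field_simps)
  have 4: "mat r n (\<lambda>(a, k). t1 * t2 * inverse (t3 ^ a) * mat r n (\<lambda>(a, k). inverse t1 * inverse t2 * inverse (inverse t3 ^ a) * J $$ (a, k)) $$ (a, k)) = J"
    using t c by (intro eq_matI) (auto simp: field_simps power_inverse)
  show ?thesis unfolding x cyc_act_def using 1 t c 3 4 by simp
qed

lemma adhm_class_act_sub:
  assumes dx: "adhm_data r n x0" and e: "adhm_equiv n x0 (adhm_act r n t x0)"
  shows "adhm_act r n t ` adhm_class r n x0 \<subseteq> adhm_class r n x0"
proof
  fix z assume "z \<in> adhm_act r n t ` adhm_class r n x0"
  then obtain y where y: "adhm_data r n y" "adhm_equiv n x0 y" and z: "z = adhm_act r n t y"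
    unfolding adhm_class_def by auto
  have cx: "adhm_carr r n x0" "adhm_carr r n y" using dx y adhm_data_carr by auto
  have "adhm_equiv n (adhm_act r n t x0) z" unfolding z by (rule adhm_act_equiv[OF cx y(2)])
  then have ez: "adhm_equiv n x0 z"
    using adhm_equiv_trans[OF cx(1) adhm_act_carr[OF cx(1)] _ e] adhm_act_carr[OF cx(2)] z by blast
  have "adhm_data r n z" using adhm_data_transport[OF dx _ ez] adhm_act_carr[OF cx(2)] z by blast
  then show "z \<in> adhm_class r n x0" using ez unfolding adhm_class_def by simp
qed

lemma cyc_class_act_sub:
  assumes dx: "cyc_data r n x0" and e: "cyc_equiv n x0 (cyc_act r n t1 t2 t3 x0)"
  shows "cyc_act r n t1 t2 t3 ` cyc_class r n x0 \<subseteq> cyc_class r n x0"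
proof
  fix z assume "z \<in> cyc_act r n t1 t2 t3 ` cyc_class r n x0"
  then obtain y where y: "cyc_data r n y" "cyc_equiv n x0 y" and z: "z = cyc_act r n t1 t2 t3 y"
    unfolding cyc_class_def by auto
  have cx: "cyc_carr r n x0" "cyc_carr r n y" using dx y cyc_data_carr by auto
  have "cyc_equiv n (cyc_act r n t1 t2 t3 x0) z" unfolding z by (rule cyc_act_equiv[OF cx y(2)])
  then have ez: "cyc_equiv n x0 z"
    using cyc_equiv_trans[OF cx(1) cyc_act_carr[OF cx(1)] _ e] cyc_act_carr[OF cx(2)] z by blast
  have "cyc_data r n z" using cyc_data_transport[OF dx _ ez] cyc_act_carr[OF cx(2)] z by blast
  then show "z \<in> cyc_class r n x0" using ez unfolding cyc_class_def by simp
qed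

lemma adhm_class_fixed_big:
  assumes dx: "adhm_data r n x0" and e: "\<And>t. t \<in> big_torus r \<Longrightarrow> adhm_equiv n x0 (adhm_act r n t x0)"
  shows "\<forall>t \<in> big_torus r. adhm_act r n t ` adhm_class r n x0 = adhm_class r n x0"
proof
  fix t assume t: "t \<in> big_torus r"
  obtain t1 t2 u where tt: "t = (t1,t2,u)" by (cases t) auto
  let ?t' = "(inverse t1, inverse t2, \<lambda>a. inverse (u a))"
  have t': "?t' \<in> big_torus r" using t tt by (auto simp: big_torus_def)
  show "adhm_act r n t ` adhm_class r n x0 = adhm_class r n x0"
  proof
    show "adhm_act r n t ` adhm_class r n x0 \<subseteq> adhm_class r n x0" by (rule adhm_class_act_sub[OF dx e[OF t]])
    show "adhm_class r n x0 \<subseteq> adhm_act r n t ` adhm_class r n x0"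
    proof
      fix y assume y: "y \<in> adhm_class r n x0"
      then have "adhm_carr r n y" unfolding adhm_class_def using adhm_data_carr by auto
      then have "y = adhm_act r n t (adhm_act r n ?t' y)" using adhm_act_inv t tt by metis
      moreover have "adhm_act r n ?t' y \<in> adhm_class r n x0" using adhm_class_act_sub[OF dx e[OF t']] y by blast
      ultimately show "y \<in> adhm_act r n t ` adhm_class r n x0" by blast
    qed
  qed
qed

lemma cyc_class_fixed:
  assumes dx: "cyc_data r n x0"
    and e: "\<And>t1 t2 t3. t1 \<noteq> 0 \<Longrightarrow> t2 \<noteq> 0 \<Longrightarrow> t3 \<noteq> 0 \<Longrightarrow> cyc_equiv n x0 (cyc_act r n t1 t2 t3 x0)"
  shows "\<forall>t1 t2 t3. t1 \<noteq> 0 \<and> t2 \<noteq> 0 \<and> t3 \<noteq> 0 \<longrightarrow> cyc_act r n t1 t2 t3 ` cyc_class r n x0 = cyc_class r n x0"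
proof (intro allI impI)
  fix t1 t2 t3 :: complex assume t: "t1 \<noteq> 0 \<and> t2 \<noteq> 0 \<and> t3 \<noteq> 0"
  show "cyc_act r n t1 t2 t3 ` cyc_class r n x0 = cyc_class r n x0"
  proof
    show "cyc_act r n t1 t2 t3 ` cyc_class r n x0 \<subseteq> cyc_class r n x0" using cyc_class_act_sub[OF dx e] t by blast
    show "cyc_class r n x0 \<subseteq> cyc_act r n t1 t2 t3 ` cyc_class r n x0"
    proof
      fix y assume y: "y \<in> cyc_class r n x0"
      then have "cyc_carr r n y" unfolding cyc_class_def using cyc_data_carr by auto
      then have "y = cyc_act r n t1 t2 t3 (cyc_act r n (inverse t1) (inverse t2) (inverse t3) y)"
        using cyc_act_inv t by metis
      moreover have "cyc_act r n (inverse t1) (inverse t2) (inverse t3) ` cyc_class r n x0 \<subseteq> cyc_class r n x0"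
        by (rule cyc_class_act_sub[OF dx e]) (use t in auto)
      then have "cyc_act r n (inverse t1) (inverse t2) (inverse t3) y \<in> cyc_class r n x0"
        using y by blast
      ultimately show "y \<in> cyc_act r n t1 t2 t3 ` cyc_class r n x0" by blast
    qed
  qed
qed


definition valid_part :: "nat \<Rightarrow> (nat \<Rightarrow> (nat \<times> nat) set) \<Rightarrow> bool" where
  "valid_part r \<mu> \<longleftrightarrow> (\<forall>a<r. young (\<mu> a)) \<and> (\<forall>a\<ge>r. \<mu> a = {})"

lemma cells_Sigma: "cells r \<mu> = Sigma {..<r} \<mu>"
  unfolding cells_def by auto

lemma cells_finite: "valid_part r \<mu> \<Longrightarrow> finite (cells r \<mu>)"
  unfolding cells_Sigma valid_part_def young_def by auto

lemma card_cells: "valid_part r \<mu> \<Longrightarrow> card (cells r \<mu>) = (\<Sum>a<r. card (\<mu> a))"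
  unfolding cells_Sigma valid_part_def young_def by (subst card_SigmaI) auto

lemma r_partitions_iff: "\<mu> \<in> r_partitions r n \<longleftrightarrow> valid_part r \<mu> \<and> card (cells r \<mu>) = n"
  unfolding r_partitions_def using card_cells by (auto simp: valid_part_def)

lemma cells_down1: "valid_part r \<mu> \<Longrightarrow> (a, Suc i, j) \<in> cells r \<mu> \<Longrightarrow> (a,i,j) \<in> cells r \<mu>"
proof -
  assume v: "valid_part r \<mu>" and c: "(a, Suc i, j) \<in> cells r \<mu>"
  then have a: "a < r" "(Suc i, j) \<in> \<mu> a" by (auto simp: cells_def)
  then have "(i, j) \<in> \<mu> a" using v unfolding valid_part_def young_def
    by (meson le_refl less_or_eq_imp_le lessI)
  then show ?thesis using a by (simp add: cells_def)
qed

lemma cells_down2: "valid_part r \<mu> \<Longrightarrow> (a, i, Suc j) \<in> cells r \<mu> \<Longrightarrow> (a,i,j) \<in> cells r \<mu>"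
proof -
  assume v: "valid_part r \<mu>" and c: "(a, i, Suc j) \<in> cells r \<mu>"
  then have a: "a < r" "(i, Suc j) \<in> \<mu> a" by (auto simp: cells_def)
  then have "(i, j) \<in> \<mu> a" using v unfolding valid_part_def young_def
    by (meson le_refl less_or_eq_imp_le lessI)
  then show ?thesis using a by (simp add: cells_def)
qed

definition cL :: "nat \<Rightarrow> (nat \<Rightarrow> (nat \<times> nat) set) \<Rightarrow> (nat \<times> nat \<times> nat) list" where
  "cL r \<mu> = sorted_list_of_set (cells r \<mu>)"

definition Ev :: "nat \<Rightarrow> (nat \<Rightarrow> (nat \<times> nat) set) \<Rightarrow> nat \<times> nat \<times> nat \<Rightarrow> complex vec" where
  "Ev r \<mu> c = vec (card (cells r \<mu>)) (\<lambda>k. if cL r \<mu> ! k = c then 1 else 0)"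

definition s1 :: "nat \<times> nat \<times> nat \<Rightarrow> nat \<times> nat \<times> nat" where "s1 c = (case c of (a,i,j) \<Rightarrow> (a, Suc i, j))"
definition s2 :: "nat \<times> nat \<times> nat \<Rightarrow> nat \<times> nat \<times> nat" where "s2 c = (case c of (a,i,j) \<Rightarrow> (a, i, Suc j))"
definition s3 :: "nat \<times> nat \<times> nat \<Rightarrow> nat \<times> nat \<times> nat" where "s3 c = (case c of (a,i,j) \<Rightarrow> (Suc a, i, j))"

definition B3_alpha :: "nat \<Rightarrow> nat \<Rightarrow> (nat \<Rightarrow> (nat \<times> nat) set) \<Rightarrow> complex mat" where
  "B3_alpha r n \<mu> = (let L = sorted_list_of_set (cells r \<mu>) in
     mat n n (\<lambda>(k,l). case L ! l of (a,i,j) \<Rightarrow> if L ! k = (Suc a, i, j) then 1 else 0))"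

definition alphaQ_data :: "nat \<Rightarrow> nat \<Rightarrow> (nat \<Rightarrow> (nat \<times> nat) set) \<Rightarrow> cycrep" where
  "alphaQ_data r n \<mu> = (case alpha_data r n \<mu> of (B1,B2,I,J) \<Rightarrow> (B1,B2,B3_alpha r n \<mu>,I,J))"

locale vpart =
  fixes r :: nat and \<mu> :: "nat \<Rightarrow> (nat \<times> nat) set"
  assumes valid: "valid_part r \<mu>"
begin

abbreviation "C \<equiv> cells r \<mu>"
abbreviation "N \<equiv> card (cells r \<mu>)"
abbreviation "L \<equiv> cL r \<mu>"
abbreviation "E \<equiv> Ev r \<mu>"

lemma finC: "finite C" using cells_finite[OF valid] .
lemma setL: "set L = C" unfolding cL_def using finC by simp
lemma distL: "distinct L" unfolding cL_def by simp
lemma lenL: "length L = N" unfolding cL_def using finC by simp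
lemma L_in: "k < N \<Longrightarrow> L ! k \<in> C" using setL lenL nth_mem by metis
lemma L_inj: "k < N \<Longrightarrow> l < N \<Longrightarrow> L ! k = L ! l \<longleftrightarrow> k = l"
  using distL lenL nth_eq_iff_index_eq by metis

lemma E_carrier[simp]: "E c \<in> carrier_vec N" unfolding Ev_def by simp

lemma E_unit: "l < N \<Longrightarrow> E (L ! l) = unit_vec N l"
  unfolding Ev_def by (intro eq_vecI) (auto simp: L_inj unit_vec_def)

lemma E_zero: "c \<notin> C \<Longrightarrow> E c = 0\<^sub>v N"
  unfolding Ev_def by (intro eq_vecI) (use L_in in auto)

lemma C_nth: "c \<in> C \<Longrightarrow> \<exists>l<N. L ! l = c"
  using setL lenL by (metis in_set_conv_nth)

lemma mat_eq_E:
  fixes X Y :: "complex mat"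
  assumes "X \<in> carrier_mat m N" "Y \<in> carrier_mat m N" "\<And>c. c \<in> C \<Longrightarrow> X *\<^sub>v E c = Y *\<^sub>v E c"
  shows "X = Y"
  using assms by (intro mat_eq_unitI[of _ m N]) (auto simp: E_unit[symmetric] L_in)

lemma col_E:
  fixes X :: "complex mat"
  assumes "X \<in> carrier_mat N N" "\<And>k l. k < N \<Longrightarrow> l < N \<Longrightarrow> X $$ (k,l) = (if L ! k = f (L ! l) then 1 else 0)"
    and c: "c \<in> C"
  shows "X *\<^sub>v E c = E (f c)"
proof -
  obtain l where l: "l < N" "L ! l = c" using C_nth[OF c] by auto
  have "X *\<^sub>v E c = X *\<^sub>v unit_vec N l" using E_unit[OF l(1)] l(2) by simp
  also have "\<dots> = col X l" using l assms(1) by (simp add: mult_unit_vec_col)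
  also have "\<dots> = E (f c)" using assms(1,2) l unfolding Ev_def by (intro eq_vecI) auto
  finally show ?thesis .
qed

definition "B1a = fst (alpha_data r N \<mu>)"
definition "B2a = fst (snd (alpha_data r N \<mu>))"
definition "Ia = fst (snd (snd (alpha_data r N \<mu>)))"
definition "B3a = B3_alpha r N \<mu>"

lemma alpha_data_eq: "alpha_data r N \<mu> = (B1a, B2a, Ia, 0\<^sub>m r N)"
  unfolding B1a_def B2a_def Ia_def alpha_data_def Let_def by simp

lemma alphaQ_data_eq: "alphaQ_data r N \<mu> = (B1a, B2a, B3a, Ia, 0\<^sub>m r N)"
  unfolding alphaQ_data_def alpha_data_eq B3a_def by simp

lemma B1a_carrier[simp]: "B1a \<in> carrier_mat N N" unfolding B1a_def alpha_data_def Let_def by simp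
lemma B2a_carrier[simp]: "B2a \<in> carrier_mat N N" unfolding B2a_def alpha_data_def Let_def by simp
lemma B3a_carrier[simp]: "B3a \<in> carrier_mat N N" unfolding B3a_def B3_alpha_def Let_def by simp
lemma Ia_carrier[simp]: "Ia \<in> carrier_mat N r" unfolding Ia_def alpha_data_def Let_def by simp

lemma B1a_E_in: "c \<in> C \<Longrightarrow> B1a *\<^sub>v E c = E (s1 c)"
  by (rule col_E) (auto simp: B1a_def alpha_data_def Let_def cL_def s1_def split: prod.splits)

lemma B2a_E_in: "c \<in> C \<Longrightarrow> B2a *\<^sub>v E c = E (s2 c)"
  by (rule col_E) (auto simp: B2a_def alpha_data_def Let_def cL_def s2_def split: prod.splits)

lemma B3a_E_in: "c \<in> C \<Longrightarrow> B3a *\<^sub>v E c = E (s3 c)"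
  by (rule col_E) (auto simp: B3a_def B3_alpha_def Let_def cL_def s3_def split: prod.splits)

lemma B1a_E: "B1a *\<^sub>v E c = E (s1 c)"
proof (cases "c \<in> C")
  case False
  obtain a i j where c: "c = (a,i,j)" by (cases c) auto
  have "s1 c \<notin> C" using False cells_down1[OF valid] by (auto simp: c s1_def)
  then show ?thesis using False by (simp add: E_zero)
qed (rule B1a_E_in)

lemma B2a_E: "B2a *\<^sub>v E c = E (s2 c)"
proof (cases "c \<in> C")
  case False
  obtain a i j where c: "c = (a,i,j)" by (cases c) auto
  have "s2 c \<notin> C" using False cells_down2[OF valid] by (auto simp: c s2_def)
  then show ?thesis using False by (simp add: E_zero)
qed (rule B2a_E_in)

lemma B3a_E:
  assumes nest: "nested r \<mu>"
  shows "B3a *\<^sub>v E c = E (s3 c)"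
proof (cases "c \<in> C")
  case False
  obtain a i j where c: "c = (a,i,j)" by (cases c) auto
  have "s3 c \<notin> C" using False nest by (auto simp: c s3_def cells_def nested_def)
  then show ?thesis using False by (simp add: E_zero)
qed (rule B3a_E_in)

lemma Ia_unit: "a < r \<Longrightarrow> Ia *\<^sub>v unit_vec r a = E (a,0,0)"
  by (simp add: mult_unit_vec_col[of _ N r] Ev_def Ia_def alpha_data_def Let_def cL_def)

end


lemma smult_mat_vec:
  fixes A :: "complex mat"
  assumes "A \<in> carrier_mat n m" "v \<in> carrier_vec m"
  shows "(c \<cdot>\<^sub>m A) *\<^sub>v v = c \<cdot>\<^sub>v (A *\<^sub>v v)"
  using assms by (intro eq_vecI) (auto simp: scalar_prod_def sum_distrib_left mult.assoc)

lemma dmat_unit: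
  assumes "a < r" shows "dmat r f *\<^sub>v unit_vec r a = f a \<cdot>\<^sub>v unit_vec r a"
  using assms by (simp add: mult_unit_vec_col[of _ r r]) (intro eq_vecI, auto simp: dmat_def unit_vec_def)

context vpart
begin

definition "Dw w = dmat N (\<lambda>k. w (L ! k))"

lemma Dw_carrier[simp]: "Dw w \<in> carrier_mat N N" by (simp add: Dw_def)

lemma Dw_E: "Dw w *\<^sub>v E c = w c \<cdot>\<^sub>v E c"
proof (cases "c \<in> C")
  case True
  then obtain l where l: "l < N" "L ! l = c" using C_nth[OF True] by blast
  then show ?thesis unfolding Dw_def using E_unit[OF l(1)] dmat_unit[OF l(1)] by simp
next
  case False
  have "Dw w *\<^sub>v 0\<^sub>v N = 0\<^sub>v N" by (simp add: mult_zero_vec_right[of _ N N])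
  moreover have "w c \<cdot>\<^sub>v 0\<^sub>v N = 0\<^sub>v N" by (intro eq_vecI) auto
  ultimately show ?thesis using False by (simp add: E_zero)
qed

lemma Dw_inv:
  assumes "\<And>c. c \<in> C \<Longrightarrow> w c \<noteq> 0"
  shows "invertible_mat (Dw w)"
proof -
  have "Dw w * Dw (\<lambda>c. inverse (w c)) = 1\<^sub>m N"
    by (rule mat_eq_E[of _ N]) (use assms in \<open>auto simp: mult_carrier_mat[of _ N N _ N] Dw_E assoc_mult_mat_vec[of _ N N _ N] mult_mat_vec[of _ N N] smult_smult_assoc\<close>)
  moreover have "Dw (\<lambda>c. inverse (w c)) * Dw w = 1\<^sub>m N"
    by (rule mat_eq_E[of _ N]) (use assms in \<open>auto simp: mult_carrier_mat[of _ N N _ N] Dw_E assoc_mult_mat_vec[of _ N N _ N] mult_mat_vec[of _ N N] smult_smult_assoc\<close>)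
  ultimately show ?thesis using invertible_iff[of "Dw w" N]
    by (metis Dw_carrier)
qed

lemma Dw_intertwine:
  assumes X: "X \<in> carrier_mat N N" and XE: "\<And>c. X *\<^sub>v E c = E (f c)"
    and w: "\<And>c. w (f c) = t * w c"
  shows "(t \<cdot>\<^sub>m X) * Dw w = Dw w * X"
proof (rule mat_eq_E[of _ N])
  fix c assume "c \<in> C"
  have "((t \<cdot>\<^sub>m X) * Dw w) *\<^sub>v E c = t \<cdot>\<^sub>v (X *\<^sub>v (w c \<cdot>\<^sub>v E c))"
    using X by (simp add: assoc_mult_mat_vec[of _ N N _ N] smult_mat_vec[of _ N N] Dw_E)
  also have "\<dots> = (t * w c) \<cdot>\<^sub>v E (f c)" using X by (simp add: mult_mat_vec[of _ N N] XE smult_smult_assoc)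
  also have "\<dots> = (Dw w * X) *\<^sub>v E c" using X by (simp add: assoc_mult_mat_vec[of _ N N _ N] XE Dw_E w)
  finally show "((t \<cdot>\<^sub>m X) * Dw w) *\<^sub>v E c = (Dw w * X) *\<^sub>v E c" .
qed (use X in \<open>auto simp: mult_carrier_mat[of _ N N _ N]\<close>)

lemma B12a_comm: "B1a * B2a = B2a * B1a"
  by (rule mat_eq_E[of _ N]) (auto simp: mult_carrier_mat[of _ N N _ N] assoc_mult_mat_vec[of _ N N _ N] B1a_E B2a_E s1_def s2_def split: prod.splits)

lemma alpha_rel: "B1a * B2a - B2a * B1a + Ia * 0\<^sub>m r N = 0\<^sub>m N N"
proof -
  have "Ia * 0\<^sub>m r N = 0\<^sub>m N N" using Ia_carrier by (rule right_mult_zero_mat)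
  then show ?thesis using B12a_comm by (subst rel_iff[of _ N _ _ r]) (auto simp: mult_carrier_mat[of _ N N _ N])
qed

lemma E_in_stable:
  assumes S: "vsubspace N S" and i1: "\<forall>v\<in>S. B1a *\<^sub>v v \<in> S" and i2: "\<forall>v\<in>S. B2a *\<^sub>v v \<in> S"
    and iI: "\<forall>w\<in>carrier_vec r. Ia *\<^sub>v w \<in> S" and a: "a < r"
  shows "E (a,i,j) \<in> S"
proof -
  have 0: "E (a,0,0) \<in> S" using iI Ia_unit[OF a] by (metis unit_vec_carrier)
  have j: "\<And>j. E (a,0,j) \<in> S"
  proof -
    fix j show "E (a,0,j) \<in> S"
    proof (induction j)
      case (Suc j)
      have "B2a *\<^sub>v E (a,0,j) = E (a,0,Suc j)" using B2a_E[of "(a,0,j)"] by (simp add: s2_def)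
      then show ?case using i2 Suc by metis
    qed (rule 0)
  qed
  show ?thesis
  proof (induction i)
    case (Suc i)
    have "B1a *\<^sub>v E (a,i,j) = E (a,Suc i,j)" using B1a_E[of "(a,i,j)"] by (simp add: s1_def)
    then show ?case using i1 Suc by metis
  qed (rule j)
qed

lemma alpha_stable: "stable_wrt r N [B1a, B2a] Ia"
  unfolding stable_wrt_def
proof (intro allI impI)
  fix S assume asm: "vsubspace N S \<and> (\<forall>B\<in>set [B1a, B2a]. \<forall>v\<in>S. B *\<^sub>v v \<in> S) \<and> (\<forall>w\<in>carrier_vec r. Ia *\<^sub>v w \<in> S)"
  show "S = carrier_vec N"
  proof (rule subspace_all)
    show "vsubspace N S" using asm by simp
    fix k assume k: "k < N"
    obtain a i j where c: "L ! k = (a,i,j)" by (cases "L ! k") auto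
    have "a < r" using L_in[OF k] c by (auto simp: cells_def)
    then have "E (a,i,j) \<in> S" using E_in_stable asm by auto
    then show "unit_vec N k \<in> S" using E_unit[OF k] c by simp
  qed
qed

lemma alpha_data_ok: "adhm_data r N (alpha_data r N \<mu>)"
  unfolding alpha_data_eq adhm_data_def using alpha_rel alpha_stable by simp

lemma B3a_comm1: "nested r \<mu> \<Longrightarrow> B3a * B1a = B1a * B3a"
  by (rule mat_eq_E[of _ N]) (auto simp: mult_carrier_mat[of _ N N _ N] assoc_mult_mat_vec[of _ N N _ N] B1a_E B3a_E s1_def s3_def split: prod.splits)

lemma B3a_comm2: "nested r \<mu> \<Longrightarrow> B3a * B2a = B2a * B3a"
  by (rule mat_eq_E[of _ N]) (auto simp: mult_carrier_mat[of _ N N _ N] assoc_mult_mat_vec[of _ N N _ N] B2a_E B3a_E s2_def s3_def split: prod.splits)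

lemma col_shift:
  assumes "a < r"
  shows "shift_mat r *\<^sub>v unit_vec r a = (if Suc a < r then unit_vec r (Suc a) else 0\<^sub>v r)"
proof -
  have "shift_mat r *\<^sub>v unit_vec r a = col (shift_mat r) a" by (rule mult_unit_vec_col[of _ r r]) (use assms in \<open>auto simp: shift_mat_def\<close>)
  also have "\<dots> = vec r (\<lambda>i. if i = Suc a then 1 else 0)" using assms by (intro eq_vecI) (auto simp: shift_mat_def)
  also have "\<dots> = (if Suc a < r then unit_vec r (Suc a) else 0\<^sub>v r)" by (auto simp: unit_vec_def intro!: eq_vecI)
  finally show ?thesis .
qed

lemma shift_carrier[simp]: "shift_mat r \<in> carrier_mat r r" by (simp add: shift_mat_def)

lemma B3a_Ia:
  assumes nest: "nested r \<mu>"
  shows "B3a * Ia = Ia * shift_mat r"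
proof (rule mat_eq_unitI[of _ N r])
  fix a assume a: "a < r"
  have "(B3a * Ia) *\<^sub>v unit_vec r a = E (Suc a, 0, 0)"
    using a by (simp add: assoc_mult_mat_vec[of _ N N _ r] Ia_unit B3a_E[OF nest] s3_def)
  also have "\<dots> = (Ia * shift_mat r) *\<^sub>v unit_vec r a"
  proof (cases "Suc a < r")
    case True then show ?thesis using a by (simp add: assoc_mult_mat_vec[of _ N r _ r] col_shift Ia_unit)
  next
    case False
    then have "(Suc a, 0, 0) \<notin> C" by (auto simp: cells_def)
    then show ?thesis using a False by (simp add: assoc_mult_mat_vec[of _ N r _ r] col_shift E_zero mult_zero_vec_right[of _ N r])
  qed
  finally show "(B3a * Ia) *\<^sub>v unit_vec r a = (Ia * shift_mat r) *\<^sub>v unit_vec r a" .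
qed (simp_all add: mult_carrier_mat[of _ N N _ r] mult_carrier_mat[of _ N r _ r])

lemma alphaQ_data_ok:
  assumes nest: "nested r \<mu>"
  shows "cyc_data r N (alphaQ_data r N \<mu>)"
proof -
  have "0\<^sub>m r N * B3a = shift_mat r * 0\<^sub>m r N"
    using B3a_carrier shift_carrier by (simp add: left_mult_zero_mat[of _ N N] right_mult_zero_mat[of _ r r])
  moreover have "stable_wrt r N [B1a, B2a, B3a] Ia" by (rule stable_mono[OF alpha_stable]) auto
  ultimately show ?thesis unfolding alphaQ_data_eq cyc_data_def
    using alpha_rel B3a_comm1[OF nest] B3a_comm2[OF nest] B3a_Ia[OF nest] by simp
qed

lemma alpha_fixed_big:
  assumes t: "t \<in> big_torus r"
  shows "adhm_equiv N (alpha_data r N \<mu>) (adhm_act r N t (alpha_data r N \<mu>))"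
proof -
  obtain t1 t2 u where tt: "t = (t1,t2,u)" by (cases t) auto
  have t': "t1 \<noteq> 0" "t2 \<noteq> 0" "\<And>a. a < r \<Longrightarrow> u a \<noteq> 0" using t tt by (auto simp: big_torus_def)
  define w where "w = (\<lambda>c::nat\<times>nat\<times>nat. case c of (a,i,j) \<Rightarrow> t1 ^ i * t2 ^ j * inverse (u a))"
  have wnz: "\<And>c. c \<in> C \<Longrightarrow> w c \<noteq> 0" using t' by (auto simp: w_def cells_def)
  have 1: "(t1 \<cdot>\<^sub>m B1a) * Dw w = Dw w * B1a"
    by (rule Dw_intertwine[OF _ B1a_E]) (auto simp: w_def s1_def split: prod.splits)
  have 2: "(t2 \<cdot>\<^sub>m B2a) * Dw w = Dw w * B2a"
    by (rule Dw_intertwine[OF _ B2a_E]) (auto simp: w_def s2_def split: prod.splits)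
  have 3: "Ia * dmat r (\<lambda>a. inverse (u a)) = Dw w * Ia"
  proof (rule mat_eq_unitI[of _ N r])
    fix a assume a: "a < r"
    show "(Ia * dmat r (\<lambda>a. inverse (u a))) *\<^sub>v unit_vec r a = (Dw w * Ia) *\<^sub>v unit_vec r a"
      using a by (simp add: assoc_mult_mat_vec[of _ N r _ r] assoc_mult_mat_vec[of _ N N _ r] dmat_unit
          mult_mat_vec[of _ N r] Ia_unit Dw_E w_def)
  qed (simp_all add: mult_carrier_mat[of _ N N _ r] mult_carrier_mat[of _ N r _ r])
  have 4: "dmat r (\<lambda>a. t1 * t2 * u a) * 0\<^sub>m r N * Dw w = 0\<^sub>m r N"
    by (simp add: right_mult_zero_mat[of _ r r] left_mult_zero_mat[of _ N N])
  show ?thesis unfolding alpha_data_eq tt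
    by (subst adhm_act_mat) (auto simp: adhm_equiv_def intro!: bexI[of _ "Dw w"] Dw_inv wnz 1 2 3 4)
qed

lemma alphaQ_fixed:
  assumes nest: "nested r \<mu>" and t: "t1 \<noteq> 0" "t2 \<noteq> 0" "t3 \<noteq> 0"
  shows "cyc_equiv N (alphaQ_data r N \<mu>) (cyc_act r N t1 t2 t3 (alphaQ_data r N \<mu>))"
proof -
  define w where "w = (\<lambda>c::nat\<times>nat\<times>nat. case c of (a,i,j) \<Rightarrow> t1 ^ i * t2 ^ j * t3 ^ a)"
  have wnz: "\<And>c. c \<in> C \<Longrightarrow> w c \<noteq> 0" using t by (auto simp: w_def cells_def)
  have 1: "(t1 \<cdot>\<^sub>m B1a) * Dw w = Dw w * B1a"
    by (rule Dw_intertwine[OF _ B1a_E]) (auto simp: w_def s1_def split: prod.splits)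
  have 2: "(t2 \<cdot>\<^sub>m B2a) * Dw w = Dw w * B2a"
    by (rule Dw_intertwine[OF _ B2a_E]) (auto simp: w_def s2_def split: prod.splits)
  have 5: "(t3 \<cdot>\<^sub>m B3a) * Dw w = Dw w * B3a"
    by (rule Dw_intertwine[OF _ B3a_E[OF nest]]) (auto simp: w_def s3_def split: prod.splits)
  have 3: "Ia * dmat r (\<lambda>a. t3 ^ a) = Dw w * Ia"
  proof (rule mat_eq_unitI[of _ N r])
    fix a assume a: "a < r"
    show "(Ia * dmat r (\<lambda>a. t3 ^ a)) *\<^sub>v unit_vec r a = (Dw w * Ia) *\<^sub>v unit_vec r a"
      using a by (simp add: assoc_mult_mat_vec[of _ N r _ r] assoc_mult_mat_vec[of _ N N _ r] dmat_unit
          mult_mat_vec[of _ N r] Ia_unit Dw_E w_def)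
  qed (simp_all add: mult_carrier_mat[of _ N N _ r] mult_carrier_mat[of _ N r _ r])
  have 4: "dmat r (\<lambda>a. t1 * t2 * inverse (t3 ^ a)) * 0\<^sub>m r N * Dw w = 0\<^sub>m r N"
    by (simp add: right_mult_zero_mat[of _ r r] left_mult_zero_mat[of _ N N])
  show ?thesis unfolding alphaQ_data_eq
    by (subst cyc_act_mat) (auto simp: cyc_equiv_def intro!: bexI[of _ "Dw w"] Dw_inv wnz 1 2 3 4 5)
qed

end


lemma mult235:
  "multiplicity (2::nat) (2^i * 3^j * 5^a) = i"
  "multiplicity (3::nat) (2^i * 3^j * 5^a) = j"
  "multiplicity (5::nat) (2^i * 3^j * 5^a) = a"
proof -
  have d: "\<And>p q k. prime (p::nat) \<Longrightarrow> prime q \<Longrightarrow> p \<noteq> q \<Longrightarrow> multiplicity p (q ^ k) = 0"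
    by (rule not_dvd_imp_multiplicity_0) (metis prime_dvd_power primes_dvd_imp_eq)
  have e: "multiplicity (2::nat) (x * y) = multiplicity 2 x + multiplicity 2 y"
          "multiplicity (3::nat) (x * y) = multiplicity 3 x + multiplicity 3 y"
          "multiplicity (5::nat) (x * y) = multiplicity 5 x + multiplicity 5 y"
    if "x \<noteq> 0" "y \<noteq> 0" for x y :: nat
    using that by (simp_all add: prime_elem_multiplicity_mult_distrib)
  have p: "prime (2::nat)" "prime (3::nat)" "prime (5::nat)" by simp_all
  show "multiplicity (2::nat) (2^i * 3^j * 5^a) = i"
    using e d p by (simp add: prime_elem_multiplicity_mult_distrib)
  show "multiplicity (3::nat) (2^i * 3^j * 5^a) = j"
    using e d p by (simp add: prime_elem_multiplicity_mult_distrib)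
  show "multiplicity (5::nat) (2^i * 3^j * 5^a) = a"
    using e d p by (simp add: prime_elem_multiplicity_mult_distrib)
qed

definition ev :: "nat \<times> nat \<times> nat \<Rightarrow> complex" where
  "ev c = (case c of (a,i,j) \<Rightarrow> 2^i * 3^j * 5^a)"

lemma ev_inj: "inj ev"
proof (rule injI)
  fix c c' assume h: "ev c = ev c'"
  obtain a i j where c: "c = (a,i,j)" by (cases c) auto
  obtain a' i' j' where c': "c' = (a',i',j')" by (cases c') auto
  have "(of_nat (2^i * 3^j * 5^a) :: complex) = of_nat (2^i' * 3^j' * 5^a')"
    using h by (simp add: c c' ev_def)
  then have "(2::nat)^i * 3^j * 5^a = 2^i' * 3^j' * 5^a'" by (simp only: of_nat_eq_iff)
  then show "c = c'" using mult235[of i j a] mult235[of i' j' a'] c c' by metis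
qed

lemma six_ne: "(6::complex) * (2^p * 3^q * 5^a) \<noteq> 5^b"
proof -
  have "even (6 * (2^p * 3^q * 5^a) :: nat)" by simp
  moreover have "odd (5^b :: nat)" by simp
  ultimately have "(6 * (2^p * 3^q * 5^a) :: nat) \<noteq> 5^b" by metis
  then have "(of_nat (6 * (2^p * 3^q * 5^a)) :: complex) \<noteq> of_nat (5^b)" by (simp only: of_nat_eq_iff not_False_eq_True)
  then show ?thesis by (metis of_nat_mult of_nat_power of_nat_numeral)
qed

definition wapp :: "complex mat list \<Rightarrow> complex vec \<Rightarrow> complex vec" where
  "wapp ws v = foldr (\<lambda>B w. B *\<^sub>v w) ws v"

lemma surj_inv:
  fixes P :: "complex mat"
  assumes P: "P \<in> carrier_mat n n" and s: "\<And>v. v \<in> carrier_vec n \<Longrightarrow> \<exists>w\<in>carrier_vec n. P *\<^sub>v w = v"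
  shows "\<exists>Q\<in>carrier_mat n n. P * Q = 1\<^sub>m n \<and> Q * P = 1\<^sub>m n"
proof -
  define wj where "wj j = (SOME w. w \<in> carrier_vec n \<and> P *\<^sub>v w = unit_vec n j)" for j
  have wj: "wj j \<in> carrier_vec n \<and> P *\<^sub>v wj j = unit_vec n j" for j
    unfolding wj_def by (rule someI_ex) (use s[of "unit_vec n j"] in auto)
  define Q where "Q = mat n n (\<lambda>(k,j). wj j $ k)"
  have Qc: "Q \<in> carrier_mat n n" by (simp add: Q_def)
  have "P * Q = 1\<^sub>m n"
  proof (rule mat_eq_unitI[of _ n n])
    fix j assume j: "j < n"
    have "Q *\<^sub>v unit_vec n j = wj j" using j Qc wj[of j] by (simp add: mult_unit_vec_col[of _ n n]) (auto simp: Q_def intro!: eq_vecI)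
    then show "(P * Q) *\<^sub>v unit_vec n j = 1\<^sub>m n *\<^sub>v unit_vec n j"
      using P Qc j wj[of j] by (simp add: assoc_mult_mat_vec[of _ n n _ n])
  qed (use P Qc in \<open>simp_all add: mult_carrier_mat[of _ n n _ n]\<close>)
  moreover then have "Q * P = 1\<^sub>m n" using mat_mult_left_right_inverse[OF P Qc] by simp
  ultimately show ?thesis using Qc by blast
qed

lemma surj_dim:
  fixes P :: "complex mat"
  assumes P: "P \<in> carrier_mat n N" and le: "N \<le> n"
    and s: "\<And>v. v \<in> carrier_vec n \<Longrightarrow> \<exists>w\<in>carrier_vec N. P *\<^sub>v w = v"
  shows "N = n"
proof (rule ccontr)
  assume "N \<noteq> n" then have lt: "N < n" using le by simp
  define P' where "P' = mat n n (\<lambda>(i,k). if k < N then P $$ (i,k) else 0)"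
  have P'c: "P' \<in> carrier_mat n n" by (simp add: P'_def)
  have s': "\<exists>w\<in>carrier_vec n. P' *\<^sub>v w = v" if v: "v \<in> carrier_vec n" for v
  proof -
    obtain w where w: "w \<in> carrier_vec N" "P *\<^sub>v w = v" using s[OF v] by auto
    define w' where "w' = vec n (\<lambda>k. if k < N then w $ k else 0)"
    have "P' *\<^sub>v w' = P *\<^sub>v w"
    proof (rule eq_vecI)
      fix i assume "i < dim_vec (P *\<^sub>v w)"
      then have i: "i < n" using P by simp
      have "(P' *\<^sub>v w') $ i = (\<Sum>k\<in>{0..<n}. (if k < N then P $$ (i,k) * w $ k else 0))"
        using i unfolding P'_def w'_def by (auto simp: scalar_prod_def intro!: sum.cong)
      also have "\<dots> = (\<Sum>k\<in>{0..<N}. P $$ (i,k) * w $ k)"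
        using lt by (simp add: sum.If_cases) (intro sum.cong, auto)
      also have "\<dots> = (P *\<^sub>v w) $ i" using i P w(1) by (simp add: scalar_prod_def)
      finally show "(P' *\<^sub>v w') $ i = (P *\<^sub>v w) $ i" .
    qed (use P P'c in auto)
    then show ?thesis using w by (auto simp: w'_def intro!: bexI[of _ w'])
  qed
  obtain Q where Q: "Q \<in> carrier_mat n n" "Q * P' = 1\<^sub>m n" using surj_inv[OF P'c s'] by auto
  have m: "n - 1 < n" "N \<le> n - 1" using lt by auto
  have z: "P' *\<^sub>v unit_vec n (n - 1) = 0\<^sub>v n"
    using m P'c by (simp add: mult_unit_vec_col[of _ n n]) (auto simp: P'_def intro!: eq_vecI)
  let ?u = "unit_vec n (n - 1) :: complex vec"
  have e1: "(Q * P') *\<^sub>v ?u = Q *\<^sub>v (P' *\<^sub>v ?u)" by (rule assoc_mult_mat_vec) (use Q P'c in auto)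
  have e2: "(Q * P') *\<^sub>v ?u = ?u" using Q(2) by simp
  have e3: "Q *\<^sub>v (P' *\<^sub>v ?u) = 0\<^sub>v n" using z Q(1) by (simp add: mult_zero_vec_right[of _ n n])
  from e1 e2 e3 have "?u = 0\<^sub>v n" by simp
  then have "?u $ (n - 1) = (0\<^sub>v n :: complex vec) $ (n - 1)" by simp
  then show False using m by simp
qed


locale fixpt =
  fixes r n :: nat and B1 B2 I J g :: "complex mat"
  assumes cB1: "B1 \<in> carrier_mat n n" and cB2: "B2 \<in> carrier_mat n n"
    and cI: "I \<in> carrier_mat n r" and cJ: "J \<in> carrier_mat r n" and cg: "g \<in> carrier_mat n n"
    and rel: "B1 * B2 - B2 * B1 + I * J = 0\<^sub>m n n"
    and st: "stable_wrt r n [B1, B2] I"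
    and gB1: "(2 \<cdot>\<^sub>m B1) * g = g * B1" and gB2: "(3 \<cdot>\<^sub>m B2) * g = g * B2"
    and gI: "\<And>a. a < r \<Longrightarrow> g *\<^sub>v col I a = (5^a) \<cdot>\<^sub>v col I a"
    and gJ: "\<And>v b. v \<in> carrier_vec n \<Longrightarrow> b < r \<Longrightarrow> 6 * (J *\<^sub>v (g *\<^sub>v v)) $ b = 5^b * (J *\<^sub>v v) $ b"
begin

lemma eig_step:
  assumes B: "B \<in> carrier_mat n n" and gB: "(t \<cdot>\<^sub>m B) * g = g * B"
    and v: "v \<in> carrier_vec n" and e: "g *\<^sub>v v = l \<cdot>\<^sub>v v"
  shows "g *\<^sub>v (B *\<^sub>v v) = (t * l) \<cdot>\<^sub>v (B *\<^sub>v v)"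
proof -
  have "g *\<^sub>v (B *\<^sub>v v) = (g * B) *\<^sub>v v" using B v cg by (simp add: assoc_mult_mat_vec[of _ n n _ n])
  also have "\<dots> = ((t \<cdot>\<^sub>m B) * g) *\<^sub>v v" using gB by simp
  also have "\<dots> = t \<cdot>\<^sub>v (B *\<^sub>v (l \<cdot>\<^sub>v v))" using B v cg e
    by (simp add: assoc_mult_mat_vec[of _ n n _ n] smult_mat_vec[of _ n n])
  also have "\<dots> = (t * l) \<cdot>\<^sub>v (B *\<^sub>v v)" using B v by (simp add: mult_mat_vec[of _ n n] smult_smult_assoc)
  finally show ?thesis .
qed

lemma wapp_carrier: "set ws \<subseteq> {B1, B2} \<Longrightarrow> v \<in> carrier_vec n \<Longrightarrow> wapp ws v \<in> carrier_vec n"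
  by (induction ws) (use cB1 cB2 in \<open>auto simp: wapp_def\<close>)

lemma eig_word:
  assumes ws: "set ws \<subseteq> {B1, B2}" and v: "v \<in> carrier_vec n" and e: "g *\<^sub>v v = l \<cdot>\<^sub>v v"
  shows "\<exists>p q. g *\<^sub>v wapp ws v = ((2::complex)^p * 3^q * l) \<cdot>\<^sub>v wapp ws v"
  using ws
proof (induction ws)
  case Nil then show ?case using e by (auto simp: wapp_def intro!: exI[of _ 0])
next
  case (Cons B ws)
  then obtain p q where pq: "g *\<^sub>v wapp ws v = ((2::complex)^p * 3^q * l) \<cdot>\<^sub>v wapp ws v" by auto
  have wc: "wapp ws v \<in> carrier_vec n" using Cons wapp_carrier v by auto
  have eq: "wapp (B # ws) v = B *\<^sub>v wapp ws v" by (simp add: wapp_def)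
  show ?case
  proof (cases "B = B1")
    case True
    have "g *\<^sub>v (B1 *\<^sub>v wapp ws v) = (2 * ((2::complex)^p * 3^q * l)) \<cdot>\<^sub>v (B1 *\<^sub>v wapp ws v)"
      by (rule eig_step[OF cB1 _ wc pq]) (use gB1 in simp)
    then have "g *\<^sub>v wapp (B # ws) v = ((2::complex)^(Suc p) * 3^q * l) \<cdot>\<^sub>v wapp (B # ws) v"
      using eq True by (simp add: mult.assoc)
    then show ?thesis by blast
  next
    case False
    then have "B = B2" using Cons by auto
    have "g *\<^sub>v (B2 *\<^sub>v wapp ws v) = (3 * ((2::complex)^p * 3^q * l)) \<cdot>\<^sub>v (B2 *\<^sub>v wapp ws v)"
      by (rule eig_step[OF cB2 _ wc pq]) (use gB2 in simp)
    then have "g *\<^sub>v wapp (B # ws) v = ((2::complex)^p * 3^(Suc q) * l) \<cdot>\<^sub>v wapp (B # ws) v"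
      using eq \<open>B = B2\<close> by (simp add: mult.assoc mult.left_commute)
    then show ?thesis by blast
  qed
qed

lemma col_I_carrier: "col I a \<in> carrier_vec n" using cI by (metis carrier_matD(1) col_dim)

lemma J_word:
  assumes a: "a < r" and ws: "set ws \<subseteq> {B1, B2}"
  shows "J *\<^sub>v wapp ws (col I a) = 0\<^sub>v r"
proof -
  define u where "u = wapp ws (col I a)"
  have uc: "u \<in> carrier_vec n" unfolding u_def using wapp_carrier[OF ws col_I_carrier] .
  obtain p q where pq: "g *\<^sub>v u = ((2::complex)^p * 3^q * 5^a) \<cdot>\<^sub>v u"
    using eig_word[OF ws col_I_carrier gI[OF a]] unfolding u_def by auto
  show ?thesis unfolding u_def[symmetric]
  proof (rule eq_vecI)
    fix b assume "b < dim_vec (0\<^sub>v r :: complex vec)"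
    then have b: "b < r" by simp
    have "6 * (J *\<^sub>v (g *\<^sub>v u)) $ b = 5^b * (J *\<^sub>v u) $ b" by (rule gJ[OF uc b])
    moreover have "(J *\<^sub>v (g *\<^sub>v u)) $ b = ((2::complex)^p * 3^q * 5^a) * (J *\<^sub>v u) $ b"
      using pq cJ uc b by (simp add: mult_mat_vec[of _ r n])
    ultimately have "(6 * ((2::complex)^p * 3^q * 5^a) - 5^b) * (J *\<^sub>v u) $ b = 0"
      by (simp add: algebra_simps)
    then show "(J *\<^sub>v u) $ b = 0\<^sub>v r $ b" using six_ne[of p q a b] b by simp
  qed (use cJ in simp)
qed

lemma wapp_zero: "set ws \<subseteq> {B1, B2} \<Longrightarrow> wapp ws (0\<^sub>v n) = 0\<^sub>v n"
  by (induction ws) (use cB1 cB2 in \<open>auto simp: wapp_def mult_zero_vec_right[of _ n n]\<close>)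

lemma wapp_add: "set ws \<subseteq> {B1, B2} \<Longrightarrow> v \<in> carrier_vec n \<Longrightarrow> w \<in> carrier_vec n \<Longrightarrow>
  wapp ws (v + w) = wapp ws v + wapp ws w"
proof (induction ws)
  case (Cons B ws)
  then have B: "B \<in> carrier_mat n n" using cB1 cB2 by auto
  show ?case using Cons wapp_carrier[of ws] by (simp add: wapp_def mult_add_distrib_mat_vec[OF B])
qed (simp add: wapp_def)

lemma wapp_smult: "set ws \<subseteq> {B1, B2} \<Longrightarrow> v \<in> carrier_vec n \<Longrightarrow> wapp ws (c \<cdot>\<^sub>v v) = c \<cdot>\<^sub>v wapp ws v"
proof (induction ws)
  case (Cons B ws)
  then have B: "B \<in> carrier_mat n n" using cB1 cB2 by auto
  show ?case using Cons wapp_carrier[of ws] by (simp add: wapp_def mult_mat_vec[OF B])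
qed (simp add: wapp_def)

lemma J_zero: "J = 0\<^sub>m r n"
proof -
  define S where "S = {v \<in> carrier_vec n. \<forall>ws. set ws \<subseteq> {B1, B2} \<longrightarrow> J *\<^sub>v wapp ws v = 0\<^sub>v r}"
  have S: "vsubspace n S"
    unfolding vsubspace_def
  proof (intro conjI ballI allI)
    show "S \<subseteq> carrier_vec n" by (auto simp: S_def)
    show "0\<^sub>v n \<in> S" using cJ by (auto simp: S_def wapp_zero mult_zero_vec_right[of _ r n])
  next
    fix v w assume "v \<in> S" "w \<in> S"
    then show "v + w \<in> S" using cJ wapp_carrier
      by (auto simp: S_def wapp_add mult_add_distrib_mat_vec[OF cJ])
  next
    fix c v assume "v \<in> S"
    then show "c \<cdot>\<^sub>v v \<in> S" using cJ wapp_carrier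
      by (auto simp: S_def wapp_smult mult_mat_vec[OF cJ] intro!: eq_vecI)
  qed
  have inv: "\<forall>B\<in>set [B1, B2]. \<forall>v\<in>S. B *\<^sub>v v \<in> S"
  proof (intro ballI)
    fix B v assume B: "B \<in> set [B1, B2]" and v: "v \<in> S"
    have "J *\<^sub>v wapp ws (B *\<^sub>v v) = 0\<^sub>v r" if ws: "set ws \<subseteq> {B1, B2}" for ws
    proof -
      have "wapp ws (B *\<^sub>v v) = wapp (ws @ [B]) v" by (simp add: wapp_def)
      then show ?thesis using v ws B unfolding S_def by auto
    qed
    then show "B *\<^sub>v v \<in> S" using v B cB1 cB2 by (auto simp: S_def)
  qed
  have iI: "\<forall>w\<in>carrier_vec r. I *\<^sub>v w \<in> S"
  proof
    fix w :: "complex vec" assume w: "w \<in> carrier_vec r"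
    show "I *\<^sub>v w \<in> S"
      by (rule mat_vec_in_subspace[OF S cI _ w]) (auto simp: S_def col_I_carrier J_word)
  qed
  have "S = carrier_vec n" using st S inv iI unfolding stable_wrt_def by blast
  then have Jv: "\<And>v. v \<in> carrier_vec n \<Longrightarrow> J *\<^sub>v v = 0\<^sub>v r"
    unfolding S_def by (metis (mono_tags, lifting) empty_subsetI foldr_Nil id_apply mem_Collect_eq set_empty wapp_def)
  show ?thesis
    by (rule mat_eq_unitI[of _ r n]) (use cJ Jv in \<open>auto simp: mult_zero_vec_right\<close>)
qed

end


context fixpt
begin

lemma comm: "B1 * B2 = B2 * B1"
proof -
  have "I * J = 0\<^sub>m n n" using J_zero cI by (simp add: right_mult_zero_mat[of _ n r])
  then have "B1 * B2 + 0\<^sub>m n n = B2 * B1" using rel_iff[OF cB1 cB2 cI cJ] rel by simp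
  then show ?thesis using cB1 cB2 by (simp add: mult_carrier_mat[of _ n n _ n])
qed

lemma comm_v: "v \<in> carrier_vec n \<Longrightarrow> B2 *\<^sub>v (B1 *\<^sub>v v) = B1 *\<^sub>v (B2 *\<^sub>v v)"
  using comm cB1 cB2 by (metis assoc_mult_mat_vec)

definition "f1 = (\<lambda>v. B1 *\<^sub>v v)"
definition "f2 = (\<lambda>v. B2 *\<^sub>v v)"

lemma f1_carrier: "v \<in> carrier_vec n \<Longrightarrow> (f1 ^^ i) v \<in> carrier_vec n"
  by (induction i) (use cB1 in \<open>auto simp: f1_def\<close>)
lemma f2_carrier: "v \<in> carrier_vec n \<Longrightarrow> (f2 ^^ j) v \<in> carrier_vec n"
  by (induction j) (use cB2 in \<open>auto simp: f2_def\<close>)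

lemma B2_f1: "v \<in> carrier_vec n \<Longrightarrow> B2 *\<^sub>v (f1 ^^ i) v = (f1 ^^ i) (B2 *\<^sub>v v)"
proof (induction i)
  case (Suc i)
  then show ?case using comm_v[OF f1_carrier[OF Suc.prems, of i]] by (simp add: f1_def)
qed simp

definition mono :: "nat \<times> nat \<times> nat \<Rightarrow> complex vec" where
  "mono c = (case c of (a,i,j) \<Rightarrow> if a < r then (f1 ^^ i) ((f2 ^^ j) (col I a)) else 0\<^sub>v n)"

lemma mono_carrier: "mono c \<in> carrier_vec n"
  unfolding mono_def using f1_carrier f2_carrier col_I_carrier by (auto split: prod.splits)

lemma mono_B1: "B1 *\<^sub>v mono c = mono (s1 c)"
  unfolding mono_def s1_def using cB1 by (auto split: prod.splits simp: f1_def mult_zero_vec_right[of _ n n])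

lemma mono_B2: "B2 *\<^sub>v mono c = mono (s2 c)"
  unfolding mono_def s2_def using cB2 B2_f1 f2_carrier col_I_carrier
  by (auto split: prod.splits simp: f2_def mult_zero_vec_right[of _ n n])

lemma mono_00: "a < r \<Longrightarrow> mono (a,0,0) = col I a" by (simp add: mono_def)

lemma mono_eig: "a < r \<Longrightarrow> g *\<^sub>v mono (a,i,j) = ev (a,i,j) \<cdot>\<^sub>v mono (a,i,j)"
proof -
  assume a: "a < r"
  have j: "g *\<^sub>v mono (a,0,j) = ev (a,0,j) \<cdot>\<^sub>v mono (a,0,j)" for j
  proof (induction j)
    case 0 then show ?case using gI[OF a] a by (simp add: mono_def ev_def)
  next
    case (Suc j)
    have "mono (a,0,Suc j) = B2 *\<^sub>v mono (a,0,j)" using mono_B2[of "(a,0,j)"] by (simp add: s2_def)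
    moreover have "g *\<^sub>v (B2 *\<^sub>v mono (a,0,j)) = (3 * ev (a,0,j)) \<cdot>\<^sub>v (B2 *\<^sub>v mono (a,0,j))"
      by (rule eig_step[OF cB2 gB2 mono_carrier Suc])
    ultimately show ?case by (simp add: ev_def mult.commute mult.left_commute)
  qed
  show ?thesis
  proof (induction i)
    case (Suc i)
    have "mono (a,Suc i,j) = B1 *\<^sub>v mono (a,i,j)" using mono_B1[of "(a,i,j)"] by (simp add: s1_def)
    moreover have "g *\<^sub>v (B1 *\<^sub>v mono (a,i,j)) = (2 * ev (a,i,j)) \<cdot>\<^sub>v (B1 *\<^sub>v mono (a,i,j))"
      by (rule eig_step[OF cB1 gB1 mono_carrier Suc])
    ultimately show ?case by (simp add: ev_def mult.commute mult.left_commute)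
  qed (rule j)
qed

lemma mono_zero_prop:
  assumes "mono (a,i,j) = 0\<^sub>v n" shows "mono (a,i+d,j+e) = 0\<^sub>v n"
proof -
  have 1: "mono (a,i,j+e) = 0\<^sub>v n" for e
  proof (induction e)
    case (Suc e)
    have "mono (a,i,j+Suc e) = B2 *\<^sub>v mono (a,i,j+e)" using mono_B2[of "(a,i,j+e)"] by (simp add: s2_def)
    then show ?case using Suc cB2 by (simp add: mult_zero_vec_right[of _ n n])
  qed (use assms in simp)
  show ?thesis
  proof (induction d)
    case (Suc d)
    have "mono (a,i+Suc d,j+e) = B1 *\<^sub>v mono (a,i+d,j+e)" using mono_B1[of "(a,i+d,j+e)"] by (simp add: s1_def)
    then show ?case using Suc cB1 by (simp add: mult_zero_vec_right[of _ n n])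
  qed (use 1 in simp)
qed

definition mux :: "nat \<Rightarrow> (nat \<times> nat) set" where
  "mux a = (if a < r then {(i,j). mono (a,i,j) \<noteq> 0\<^sub>v n} else {})"

lemma cells_mux: "c \<in> cells r mux \<longleftrightarrow> mono c \<noteq> 0\<^sub>v n"
  unfolding cells_def mux_def mono_def by (auto split: prod.splits)

lemma cells_mux_finite_card: "finite (cells r mux) \<and> card (cells r mux) \<le> n"
proof -
  let ?p = "char_poly g"
  have dp: "degree ?p = n" "coeff ?p n = 1" using degree_monic_char_poly[OF cg] by auto
  then have p0: "?p \<noteq> 0" by auto
  have sub: "ev ` cells r mux \<subseteq> {x. poly ?p x = 0}"
  proof
    fix x assume "x \<in> ev ` cells r mux"
    then obtain c where c: "c \<in> cells r mux" "x = ev c" by auto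
    obtain a i j where cc: "c = (a,i,j)" by (cases c) auto
    have a: "a < r" using c(1) cc by (auto simp: cells_def)
    have "eigenvector g (mono c) (ev c)"
      unfolding eigenvector_def using cg mono_carrier c(1) mono_eig[OF a] cc by (simp add: cells_mux)
    then have "eigenvalue g x" using c(2) by (auto simp: eigenvalue_def)
    then show "x \<in> {x. poly ?p x = 0}" using eigenvalue_root_char_poly[OF cg] by simp
  qed
  have fin: "finite {x. poly ?p x = 0}" using poly_roots_finite[OF p0] .
  have cardb: "card {x. poly ?p x = 0} \<le> n" using card_poly_roots_bound[OF p0] dp by simp
  have inj: "inj_on ev (cells r mux)" using inj_on_subset[OF ev_inj subset_UNIV] .
  have f: "finite (cells r mux)" using finite_subset[OF sub fin] inj by (simp add: finite_image_iff)
  have "card (cells r mux) = card (ev ` cells r mux)" using card_image[OF inj] by simp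
  also have "\<dots> \<le> n" using card_mono[OF fin sub] cardb by simp
  finally show ?thesis using f by simp
qed

lemma mux_valid: "valid_part r mux"
  unfolding valid_part_def
proof (intro conjI allI impI)
  fix a assume a: "a < r"
  have fin: "finite (mux a)"
  proof -
    have "mux a \<subseteq> (\<lambda>c. (fst (snd c), snd (snd c))) ` cells r mux"
      using a by (auto simp: cells_def mux_def image_iff intro!: bexI)
    then show ?thesis using cells_mux_finite_card finite_subset by blast
  qed
  show "young (mux a)" unfolding young_def
  proof (intro conjI fin allI impI)
    fix i j i' j' assume h: "(i, j) \<in> mux a \<and> i' \<le> i \<and> j' \<le> j"
    show "(i', j') \<in> mux a"
    proof (rule ccontr)
      assume "(i', j') \<notin> mux a"
      then have "mono (a,i',j') = 0\<^sub>v n" using a by (simp add: mux_def)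
      then have "mono (a,i'+(i-i'),j'+(j-j')) = 0\<^sub>v n" by (rule mono_zero_prop)
      then show False using h a by (simp add: mux_def)
    qed
  qed
qed (simp add: mux_def)

end

sublocale fixpt \<subseteq> vp: vpart r mux
  by unfold_locales (rule mux_valid)

context fixpt
begin

definition "Pm = mat n vp.N (\<lambda>(i,k). mono (vp.L ! k) $ i)"

lemma Pm_carrier: "Pm \<in> carrier_mat n vp.N" by (simp add: Pm_def)

lemma Pm_E: "Pm *\<^sub>v vp.E c = mono c"
proof (cases "c \<in> vp.C")
  case True
  then obtain l where l: "l < vp.N" "vp.L ! l = c" using vp.C_nth by blast
  have "Pm *\<^sub>v vp.E c = col Pm l" using vp.E_unit[OF l(1)] l Pm_carrier by (simp add: mult_unit_vec_col)
  also have "\<dots> = mono c" using l mono_carrier[of c] by (intro eq_vecI) (auto simp: Pm_def)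
  finally show ?thesis .
next
  case False
  then show ?thesis using Pm_carrier cells_mux by (simp add: vp.E_zero mult_zero_vec_right[of _ n vp.N])
qed

lemma B1_Pm: "B1 * Pm = Pm * vp.B1a"
  by (rule vp.mat_eq_E[of _ n])
     (use cB1 Pm_carrier in \<open>auto simp: mult_carrier_mat[of _ n n _ vp.N] mult_carrier_mat[of _ n vp.N _ vp.N]
        assoc_mult_mat_vec[of _ n n _ vp.N] assoc_mult_mat_vec[of _ n vp.N _ vp.N] Pm_E mono_B1 vp.B1a_E\<close>)

lemma B2_Pm: "B2 * Pm = Pm * vp.B2a"
  by (rule vp.mat_eq_E[of _ n])
     (use cB2 Pm_carrier in \<open>auto simp: mult_carrier_mat[of _ n n _ vp.N] mult_carrier_mat[of _ n vp.N _ vp.N]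
        assoc_mult_mat_vec[of _ n n _ vp.N] assoc_mult_mat_vec[of _ n vp.N _ vp.N] Pm_E mono_B2 vp.B2a_E\<close>)

lemma I_Pm: "I = Pm * vp.Ia"
proof (rule mat_eq_unitI[of _ n r])
  fix a assume a: "a < r"
  have "I *\<^sub>v unit_vec r a = col I a" using cI a by (simp add: mult_unit_vec_col)
  also have "\<dots> = (Pm * vp.Ia) *\<^sub>v unit_vec r a"
    using a Pm_carrier by (simp add: assoc_mult_mat_vec[of _ n vp.N _ r] vp.Ia_unit Pm_E mono_00)
  finally show "I *\<^sub>v unit_vec r a = (Pm * vp.Ia) *\<^sub>v unit_vec r a" .
qed (use cI Pm_carrier in \<open>simp_all add: mult_carrier_mat[of _ n vp.N _ r]\<close>)

lemma Pm_surj: "v \<in> carrier_vec n \<Longrightarrow> \<exists>w\<in>carrier_vec vp.N. Pm *\<^sub>v w = v"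
proof -
  define S where "S = {v. \<exists>w\<in>carrier_vec vp.N. Pm *\<^sub>v w = v}"
  have S: "vsubspace n S" unfolding vsubspace_def
  proof (intro conjI ballI allI)
    show "S \<subseteq> carrier_vec n" using Pm_carrier by (auto simp: S_def)
    show "0\<^sub>v n \<in> S" using Pm_carrier by (auto simp: S_def mult_zero_vec_right intro!: bexI[of _ "0\<^sub>v vp.N"])
  next
    fix v w assume "v \<in> S" "w \<in> S"
    then obtain v' w' where "v' \<in> carrier_vec vp.N" "w' \<in> carrier_vec vp.N" "Pm *\<^sub>v v' = v" "Pm *\<^sub>v w' = w"
      by (auto simp: S_def)
    then show "v + w \<in> S" using Pm_carrier unfolding S_def
      by (auto intro!: bexI[of _ "v' + w'"] simp: mult_add_distrib_mat_vec[OF Pm_carrier])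
  next
    fix c v assume "v \<in> S"
    then obtain v' where "v' \<in> carrier_vec vp.N" "Pm *\<^sub>v v' = v" by (auto simp: S_def)
    then show "c \<cdot>\<^sub>v v \<in> S" using Pm_carrier unfolding S_def
      by (auto intro!: bexI[of _ "c \<cdot>\<^sub>v v'"] simp: mult_mat_vec[OF Pm_carrier])
  qed
  have inv: "\<forall>B\<in>set [B1, B2]. \<forall>v\<in>S. B *\<^sub>v v \<in> S"
  proof (intro ballI)
    fix B v assume B: "B \<in> set [B1, B2]" and v: "v \<in> S"
    then obtain w where w: "w \<in> carrier_vec vp.N" "Pm *\<^sub>v w = v" by (auto simp: S_def)
    show "B *\<^sub>v v \<in> S"
    proof (cases "B = B1")
      case True
      have "B1 *\<^sub>v v = Pm *\<^sub>v (vp.B1a *\<^sub>v w)" using w cB1 Pm_carrier B1_Pm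
        by (metis assoc_mult_mat_vec vp.B1a_carrier)
      moreover have "vp.B1a *\<^sub>v w \<in> carrier_vec vp.N" using mult_mat_vec_carrier[OF vp.B1a_carrier w(1)] .
      ultimately show ?thesis using True unfolding S_def by (metis (mono_tags, lifting) mem_Collect_eq)
    next
      case False
      then have "B = B2" using B by auto
      have "B2 *\<^sub>v v = Pm *\<^sub>v (vp.B2a *\<^sub>v w)" using w cB2 Pm_carrier B2_Pm
        by (metis assoc_mult_mat_vec vp.B2a_carrier)
      moreover have "vp.B2a *\<^sub>v w \<in> carrier_vec vp.N" using mult_mat_vec_carrier[OF vp.B2a_carrier w(1)] .
      ultimately show ?thesis using \<open>B = B2\<close> unfolding S_def by (metis (mono_tags, lifting) mem_Collect_eq)
    qed
  qed
  have iI: "\<forall>w\<in>carrier_vec r. I *\<^sub>v w \<in> S"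
  proof
    fix w :: "complex vec" assume w: "w \<in> carrier_vec r"
    have "I *\<^sub>v w = Pm *\<^sub>v (vp.Ia *\<^sub>v w)" using I_Pm w Pm_carrier
      by (metis assoc_mult_mat_vec vp.Ia_carrier)
    moreover have "vp.Ia *\<^sub>v w \<in> carrier_vec vp.N" using mult_mat_vec_carrier[OF vp.Ia_carrier w] .
    ultimately show "I *\<^sub>v w \<in> S" unfolding S_def by (metis (mono_tags, lifting) mem_Collect_eq)
  qed
  have "S = carrier_vec n" using st S inv iI unfolding stable_wrt_def by blast
  then show "v \<in> carrier_vec n \<Longrightarrow> \<exists>w\<in>carrier_vec vp.N. Pm *\<^sub>v w = v" by (auto simp: S_def)
qed

lemma N_eq: "vp.N = n"
  using surj_dim[OF Pm_carrier _ Pm_surj] cells_mux_finite_card by simp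

lemma Pm_inv: "invertible_mat Pm"
proof -
  have Pc: "Pm \<in> carrier_mat n n" using Pm_carrier N_eq by simp
  obtain Q where "Q \<in> carrier_mat n n" "Pm * Q = 1\<^sub>m n" "Q * Pm = 1\<^sub>m n"
    using surj_inv[OF Pc] Pm_surj N_eq by auto
  then show ?thesis using invertible_iff[OF Pc] by auto
qed

lemma mux_part: "mux \<in> r_partitions r n"
  using r_partitions_iff mux_valid N_eq by simp

lemma fix_equiv: "adhm_equiv n (alpha_data r n mux) (B1, B2, I, J)"
proof -
  have "J * Pm = 0\<^sub>m r n" using J_zero Pm_carrier N_eq by (simp add: left_mult_zero_mat[of _ n n])
  then show ?thesis
    using vp.alpha_data_eq N_eq B1_Pm B2_Pm I_Pm Pm_inv Pm_carrier
    unfolding adhm_equiv_def by (auto intro!: bexI[of _ Pm])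
qed

end


lemma funpow_zero_vec:
  fixes f :: "complex vec \<Rightarrow> complex vec"
  assumes "f (0\<^sub>v n) = 0\<^sub>v n" shows "(f ^^ k) (0\<^sub>v n) = 0\<^sub>v n"
proof (induction k)
  case 0 show ?case by (simp add: funpow_0)
next
  case (Suc k) then show ?case using assms by simp
qed

locale fixptQ = fixpt +
  fixes B3 :: "complex mat"
  assumes cB3: "B3 \<in> carrier_mat n n"
    and c31: "B3 * B1 = B1 * B3" and c32: "B3 * B2 = B2 * B3"
    and B3I: "B3 * I = I * shift_mat r"
begin

lemma B3_f1: "v \<in> carrier_vec n \<Longrightarrow> B3 *\<^sub>v (f1 ^^ i) v = (f1 ^^ i) (B3 *\<^sub>v v)"
proof (induction i)
  case (Suc i)
  have "B3 *\<^sub>v (B1 *\<^sub>v (f1 ^^ i) v) = B1 *\<^sub>v (B3 *\<^sub>v (f1 ^^ i) v)"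
    using c31 cB1 cB3 f1_carrier[OF Suc.prems] by (metis assoc_mult_mat_vec)
  then show ?case using Suc by (simp add: f1_def)
qed simp

lemma B3_f2: "v \<in> carrier_vec n \<Longrightarrow> B3 *\<^sub>v (f2 ^^ i) v = (f2 ^^ i) (B3 *\<^sub>v v)"
proof (induction i)
  case (Suc i)
  have "B3 *\<^sub>v (B2 *\<^sub>v (f2 ^^ i) v) = B2 *\<^sub>v (B3 *\<^sub>v (f2 ^^ i) v)"
    using c32 cB2 cB3 f2_carrier[OF Suc.prems] by (metis assoc_mult_mat_vec)
  then show ?case using Suc by (simp add: f2_def)
qed simp

lemma B3_col: "a < r \<Longrightarrow> B3 *\<^sub>v col I a = (if Suc a < r then col I (Suc a) else 0\<^sub>v n)"
proof -
  assume a: "a < r"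
  have "B3 *\<^sub>v col I a = col (B3 * I) a" using cB3 cI a by (simp add: col_mult2)
  also have "\<dots> = col (I * shift_mat r) a" using B3I by simp
  also have "\<dots> = I *\<^sub>v col (shift_mat r) a" using col_mult2[OF cI vp.shift_carrier a] .
  also have "\<dots> = I *\<^sub>v (shift_mat r *\<^sub>v unit_vec r a)"
    using a vp.shift_carrier by (simp add: mult_unit_vec_col[of _ r r])
  also have "\<dots> = (if Suc a < r then col I (Suc a) else 0\<^sub>v n)"
    using a cI by (simp add: vp.col_shift mult_unit_vec_col[of _ n r] mult_zero_vec_right[of _ n r])
  finally show ?thesis .
qed

lemma mono_B3: "B3 *\<^sub>v mono c = mono (s3 c)"
proof -
  obtain a i j where c: "c = (a,i,j)" by (cases c) auto
  show ?thesis
  proof (cases "a < r")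
    case True
    have "B3 *\<^sub>v mono c = (f1 ^^ i) ((f2 ^^ j) (B3 *\<^sub>v col I a))"
      using True c B3_f1 B3_f2 f2_carrier col_I_carrier by (simp add: mono_def)
    also have "\<dots> = mono (s3 c)"
    proof (cases "Suc a < r")
      case True then show ?thesis using c B3_col \<open>a < r\<close> by (simp add: mono_def s3_def)
    next
      case False
      have z1: "(f2 ^^ j) (0\<^sub>v n) = 0\<^sub>v n" by (rule funpow_zero_vec) (use cB2 in \<open>simp add: f2_def mult_zero_vec_right[of _ n n]\<close>)
      have z2: "(f1 ^^ i) (0\<^sub>v n) = 0\<^sub>v n" by (rule funpow_zero_vec) (use cB1 in \<open>simp add: f1_def mult_zero_vec_right[of _ n n]\<close>)
      show ?thesis using False c B3_col \<open>a < r\<close> z1 z2 by (simp add: mono_def s3_def)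
    qed
    finally show ?thesis .
  next
    case False
    then show ?thesis using c cB3 by (simp add: mono_def s3_def mult_zero_vec_right[of _ n n])
  qed
qed

lemma mux_nested: "nested r mux"
  unfolding nested_def
proof (intro allI impI subsetI)
  fix a x assume a: "Suc a < r" and x: "x \<in> mux (Suc a)"
  obtain i j where xx: "x = (i,j)" by (cases x) auto
  have "mono (Suc a,i,j) \<noteq> 0\<^sub>v n" using x a xx by (simp add: mux_def)
  moreover have "mono (Suc a,i,j) = B3 *\<^sub>v mono (a,i,j)" using mono_B3[of "(a,i,j)"] by (simp add: s3_def)
  ultimately have "mono (a,i,j) \<noteq> 0\<^sub>v n" using cB3 by (auto simp: mult_zero_vec_right[of _ n n])
  then show "x \<in> mux a" using a xx by (simp add: mux_def)
qed

lemma B3_Pm: "B3 * Pm = Pm * vp.B3a"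
  by (rule vp.mat_eq_E[of _ n])
     (use cB3 Pm_carrier in \<open>auto simp: mult_carrier_mat[of _ n n _ vp.N] mult_carrier_mat[of _ n vp.N _ vp.N]
        assoc_mult_mat_vec[of _ n n _ vp.N] assoc_mult_mat_vec[of _ n vp.N _ vp.N] Pm_E mono_B3 vp.B3a_E[OF mux_nested]\<close>)

lemma fixQ_equiv: "cyc_equiv n (alphaQ_data r n mux) (B1, B2, B3, I, J)"
proof -
  have "J * Pm = 0\<^sub>m r n" using J_zero Pm_carrier N_eq by (simp add: left_mult_zero_mat[of _ n n])
  then show ?thesis
    using vp.alphaQ_data_eq N_eq B1_Pm B2_Pm B3_Pm I_Pm Pm_inv Pm_carrier
    unfolding cyc_equiv_def by (auto intro!: bexI[of _ Pm])
qed

end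

context vpart
begin

lemma E_nonzero: "E c \<noteq> 0\<^sub>v N \<longleftrightarrow> c \<in> C"
proof
  assume "c \<in> C"
  then obtain l where l: "l < N" "L ! l = c" using C_nth by blast
  have "E c $ l = 1" using l E_unit[OF l(1)] by simp
  then show "E c \<noteq> 0\<^sub>v N" using l by auto
next
  assume "E c \<noteq> 0\<^sub>v N" then show "c \<in> C" using E_zero[of c] by blast
qed

end


lemma alpha_inj:
  assumes m: "\<mu> \<in> r_partitions r n" and v: "\<nu> \<in> r_partitions r n"
    and e: "adhm_equiv n (alpha_data r n \<mu>) (alpha_data r n \<nu>)"
  shows "\<mu> = \<nu>"
proof -
  interpret M: vpart r \<mu> using m by unfold_locales (simp add: r_partitions_iff)
  interpret V: vpart r \<nu> using v by unfold_locales (simp add: r_partitions_iff)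
  have nm: "M.N = n" and nv: "V.N = n" using m v by (auto simp: r_partitions_iff)
  obtain g where g: "g \<in> carrier_mat n n" "invertible_mat g" "V.B1a * g = g * M.B1a" "V.B2a * g = g * M.B2a"
    "V.Ia = g * M.Ia"
  proof -
    have "adhm_equiv n (M.B1a, M.B2a, M.Ia, 0\<^sub>m r n) (V.B1a, V.B2a, V.Ia, 0\<^sub>m r n)"
    proof -
      have am: "alpha_data r n \<mu> = (M.B1a, M.B2a, M.Ia, 0\<^sub>m r n)" using M.alpha_data_eq unfolding nm .
      have av: "alpha_data r n \<nu> = (V.B1a, V.B2a, V.Ia, 0\<^sub>m r n)" using V.alpha_data_eq unfolding nv .
      have "adhm_equiv n (alpha_data r n \<mu>) (alpha_data r n \<nu>) = adhm_equiv n (M.B1a, M.B2a, M.Ia, 0\<^sub>m r n) (V.B1a, V.B2a, V.Ia, 0\<^sub>m r n)"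
        by (rule arg_cong2[where f="adhm_equiv n", OF am av])
      then show ?thesis using e by (rule iffD1)
    qed
    then show thesis using that unfolding adhm_equiv_def prod.case by blast
  qed
  obtain h where h: "h \<in> carrier_mat n n" "h * g = 1\<^sub>m n" using g invertible_iff[OF g(1)] by auto
  have gE: "g *\<^sub>v M.E c = V.E c" for c
  proof -
    obtain a i j where c: "c = (a,i,j)" by (cases c) auto
    show ?thesis
    proof (cases "a < r")
      case False
      then have "c \<notin> M.C" "c \<notin> V.C" using c by (auto simp: cells_def)
      then show ?thesis using g(1) nm nv by (simp add: M.E_zero V.E_zero mult_zero_vec_right[of _ n n])
    next
      case a: True
      have j: "g *\<^sub>v M.E (a,0,j) = V.E (a,0,j)" for j
      proof (induction j)
        case 0
        have "g *\<^sub>v M.E (a,0,0) = g *\<^sub>v (M.Ia *\<^sub>v unit_vec r a)" using M.Ia_unit[OF a] by simp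
        also have "\<dots> = V.Ia *\<^sub>v unit_vec r a" using g(1,5) nm M.Ia_carrier
          by (simp add: assoc_mult_mat_vec[of _ n n _ r])
        finally show ?case using V.Ia_unit[OF a] by simp
      next
        case (Suc j)
        have "g *\<^sub>v M.E (a,0,Suc j) = g *\<^sub>v (M.B2a *\<^sub>v M.E (a,0,j))" using M.B2a_E[of "(a,0,j)"] by (simp add: s2_def)
        also have "\<dots> = (g * M.B2a) *\<^sub>v M.E (a,0,j)"
          using g(1) M.B2a_carrier M.E_carrier unfolding nm by (intro assoc_mult_mat_vec[symmetric]) auto
        also have "\<dots> = (V.B2a * g) *\<^sub>v M.E (a,0,j)" using g(4) by simp
        also have "\<dots> = V.B2a *\<^sub>v (g *\<^sub>v M.E (a,0,j))"
          using g(1) V.B2a_carrier M.E_carrier unfolding nm nv by (intro assoc_mult_mat_vec) auto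
        also have "\<dots> = V.E (a,0,Suc j)" using Suc V.B2a_E[of "(a,0,j)"] by (simp add: s2_def)
        finally show ?case .
      qed
      have "g *\<^sub>v M.E (a,i,j) = V.E (a,i,j)"
      proof (induction i)
        case (Suc i)
        have "g *\<^sub>v M.E (a,Suc i,j) = g *\<^sub>v (M.B1a *\<^sub>v M.E (a,i,j))" using M.B1a_E[of "(a,i,j)"] by (simp add: s1_def)
        also have "\<dots> = (g * M.B1a) *\<^sub>v M.E (a,i,j)"
          using g(1) M.B1a_carrier M.E_carrier unfolding nm by (intro assoc_mult_mat_vec[symmetric]) auto
        also have "\<dots> = (V.B1a * g) *\<^sub>v M.E (a,i,j)" using g(3) by simp
        also have "\<dots> = V.B1a *\<^sub>v (g *\<^sub>v M.E (a,i,j))"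
          using g(1) V.B1a_carrier M.E_carrier unfolding nm nv by (intro assoc_mult_mat_vec) auto
        also have "\<dots> = V.E (a,Suc i,j)" using Suc V.B1a_E[of "(a,i,j)"] by (simp add: s1_def)
        finally show ?case .
      qed (rule j)
      then show ?thesis using c by simp
    qed
  qed
  have inj0: "x \<in> carrier_vec n \<Longrightarrow> g *\<^sub>v x = 0\<^sub>v n \<Longrightarrow> x = 0\<^sub>v n" for x
  proof -
    assume x: "x \<in> carrier_vec n" and gx: "g *\<^sub>v x = 0\<^sub>v n"
    have "(h * g) *\<^sub>v x = h *\<^sub>v (g *\<^sub>v x)" by (rule assoc_mult_mat_vec) (use h g x in auto)
    then have "x = h *\<^sub>v 0\<^sub>v n" using h(2) x gx by simp
    then show "x = 0\<^sub>v n" using h by (simp add: mult_zero_vec_right[of _ n n])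
  qed
  have cells_eq: "c \<in> M.C \<longleftrightarrow> c \<in> V.C" for c
  proof -
    have 1: "c \<in> M.C \<longleftrightarrow> M.E c \<noteq> 0\<^sub>v n" using M.E_nonzero[of c] unfolding nm by (rule sym)
    have Ec: "M.E c \<in> carrier_vec n" using M.E_carrier[of c] unfolding nm .
    have 2: "M.E c \<noteq> 0\<^sub>v n \<longleftrightarrow> g *\<^sub>v M.E c \<noteq> 0\<^sub>v n"
    proof
      assume "M.E c \<noteq> 0\<^sub>v n" then show "g *\<^sub>v M.E c \<noteq> 0\<^sub>v n" using inj0[OF Ec] by blast
    next
      assume a: "g *\<^sub>v M.E c \<noteq> 0\<^sub>v n"
      show "M.E c \<noteq> 0\<^sub>v n"
      proof
        assume "M.E c = 0\<^sub>v n"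
        then have "g *\<^sub>v M.E c = 0\<^sub>v n" using mult_zero_vec_right[OF g(1)] by simp
        then show False using a by contradiction
      qed
    qed
    have 3: "V.E c \<noteq> 0\<^sub>v n \<longleftrightarrow> c \<in> V.C" using V.E_nonzero[of c] unfolding nv .
    from 1 2 3 gE[of c] show ?thesis by metis
  qed
  show "\<mu> = \<nu>"
  proof
    fix a
    show "\<mu> a = \<nu> a"
    proof (cases "a < r")
      case True
      then show ?thesis using cells_eq by (auto simp: cells_def)
    next
      case False
      then show ?thesis using M.valid V.valid by (simp add: valid_part_def)
    qed
  qed
qed


lemma mat_scale_rows_vec:
  fixes J :: "complex mat"
  assumes J: "J \<in> carrier_mat r n" and w: "w \<in> carrier_vec n" and b: "b < r"
  shows "(mat r n (\<lambda>(a,k). c a * J $$ (a,k)) *\<^sub>v w) $ b = c b * (J *\<^sub>v w) $ b"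
  using assms by (auto simp: scalar_prod_def sum_distrib_left mult.assoc intro!: sum.cong)

lemma fixpt_glue:
  fixes B1 B2 I J g :: "complex mat"
  assumes c: "B1 \<in> carrier_mat n n" "B2 \<in> carrier_mat n n" "I \<in> carrier_mat n r" "J \<in> carrier_mat r n"
    and rel: "B1 * B2 - B2 * B1 + I * J = 0\<^sub>m n n" and st: "stable_wrt r n [B1, B2] I"
    and g: "g \<in> carrier_mat n n" "(2 \<cdot>\<^sub>m B1) * g = g * B1" "(3 \<cdot>\<^sub>m B2) * g = g * B2"
    and gI': "mat n r (\<lambda>(k,a). 5 ^ a * I $$ (k,a)) = g * I"
    and gJ': "mat r n (\<lambda>(a,k). 2 * 3 * inverse (5 ^ a) * J $$ (a,k)) * g = J"
  shows "fixpt r n B1 B2 I J g"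
proof
  show "g *\<^sub>v col I a = (5^a) \<cdot>\<^sub>v col I a" if a: "a < r" for a
  proof -
    have "g *\<^sub>v col I a = col (g * I) a" using g c a by (simp add: col_mult2)
    also have "\<dots> = col (mat n r (\<lambda>(k,a). 5 ^ a * I $$ (k,a))) a" using gI' by simp
    also have "\<dots> = (5^a) \<cdot>\<^sub>v col I a" using a c by (intro eq_vecI) auto
    finally show ?thesis .
  qed
  show "6 * (J *\<^sub>v (g *\<^sub>v v)) $ b = 5^b * (J *\<^sub>v v) $ b" if v: "v \<in> carrier_vec n" and b: "b < r" for v b
  proof -
    let ?J' = "mat r n (\<lambda>(a,k). 2 * 3 * inverse (5 ^ a) * J $$ (a,k))"
    have "(?J' * g) *\<^sub>v v = ?J' *\<^sub>v (g *\<^sub>v v)" by (rule assoc_mult_mat_vec) (use g v in auto)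
    then have "J *\<^sub>v v = ?J' *\<^sub>v (g *\<^sub>v v)" unfolding gJ' .
    then have "(J *\<^sub>v v) $ b = 2 * 3 * inverse (5 ^ b) * (J *\<^sub>v (g *\<^sub>v v)) $ b"
      using mat_scale_rows_vec[OF c(4) _ b, of "g *\<^sub>v v" "\<lambda>a. 2 * 3 * inverse (5 ^ a)"] g v by simp
    then show ?thesis by (simp add: field_simps)
  qed
qed (use assms in auto)

lemma fixpt_of_adhm:
  assumes d: "adhm_data r n (B1,B2,I,J)"
    and e: "adhm_equiv n (B1,B2,I,J) (adhm_act r n (small_to_big 2 3 5) (B1,B2,I,J))"
  shows "\<exists>g. fixpt r n B1 B2 I J g"
proof -
  have c: "B1 \<in> carrier_mat n n" "B2 \<in> carrier_mat n n" "I \<in> carrier_mat n r" "J \<in> carrier_mat r n"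
    and rel: "B1 * B2 - B2 * B1 + I * J = 0\<^sub>m n n" and st: "stable_wrt r n [B1, B2] I"
    using d by (auto simp: adhm_data_def)
  obtain g where g: "g \<in> carrier_mat n n" "(2 \<cdot>\<^sub>m B1) * g = g * B1" "(3 \<cdot>\<^sub>m B2) * g = g * B2"
    "mat n r (\<lambda>(k,a). I $$ (k,a) * inverse (inverse (5 ^ a))) = g * I"
    "mat r n (\<lambda>(a,k). 2 * 3 * inverse (5 ^ a) * J $$ (a,k)) * g = J"
    using e unfolding adhm_equiv_def adhm_act_def small_to_big_def by auto
  have "mat n r (\<lambda>(k,a). 5 ^ a * I $$ (k,a)) = g * I" using g(4) by (simp add: mult.commute)
  then show ?thesis using fixpt_glue[OF c rel st g(1-3) _ g(5)] by blast
qed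

lemma fixptQ_of_cyc:
  assumes d: "cyc_data r n (B1,B2,B3,I,J)"
    and e: "cyc_equiv n (B1,B2,B3,I,J) (cyc_act r n 2 3 5 (B1,B2,B3,I,J))"
  shows "\<exists>g. fixptQ r n B1 B2 I J g B3"
proof -
  have c: "B1 \<in> carrier_mat n n" "B2 \<in> carrier_mat n n" "B3 \<in> carrier_mat n n" "I \<in> carrier_mat n r" "J \<in> carrier_mat r n"
    and rel: "B1 * B2 - B2 * B1 + I * J = 0\<^sub>m n n" and st: "stable_wrt r n [B1, B2, B3] I"
    and r3: "B3 * B1 = B1 * B3" "B3 * B2 = B2 * B3" "B3 * I = I * shift_mat r"
    using d by (auto simp: cyc_data_def)
  have st2: "stable_wrt r n [B1, B2] I" by (rule stable_drop_B3[OF st c(1-4) r3])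
  obtain g where g: "g \<in> carrier_mat n n" "(2 \<cdot>\<^sub>m B1) * g = g * B1" "(3 \<cdot>\<^sub>m B2) * g = g * B2"
    "mat n r (\<lambda>(k,a). 5 ^ a * I $$ (k,a)) = g * I"
    "mat r n (\<lambda>(a,k). 2 * 3 * inverse (5 ^ a) * J $$ (a,k)) * g = J"
    using e unfolding cyc_equiv_def cyc_act_def by auto
  have "fixpt r n B1 B2 I J g" using fixpt_glue[OF c(1,2,4,5) rel st2 g] .
  then show ?thesis using r3 c(3) unfolding fixptQ_def fixptQ_axioms_def by blast
qed


lemma alpha_ok:
  assumes "\<mu> \<in> r_partitions r n" shows "adhm_data r n (alpha_data r n \<mu>)"
proof -
  interpret M: vpart r \<mu> using assms by unfold_locales (simp add: r_partitions_iff)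
  have "M.N = n" using assms by (simp add: r_partitions_iff)
  then show ?thesis using M.alpha_data_ok by simp
qed

lemma alphaQ_ok:
  assumes "\<mu> \<in> nested_partitions r n" shows "cyc_data r n (alphaQ_data r n \<mu>)"
proof -
  have m: "\<mu> \<in> r_partitions r n" "nested r \<mu>" using assms by (auto simp: nested_partitions_def)
  interpret M: vpart r \<mu> using m by unfold_locales (simp add: r_partitions_iff)
  have "M.N = n" using m by (simp add: r_partitions_iff)
  then show ?thesis using M.alphaQ_data_ok[OF m(2)] by simp
qed

lemma alpha_big:
  assumes m: "\<mu> \<in> r_partitions r n" shows "alpha r n \<mu> \<in> A_fixed_big r n"
proof -
  interpret M: vpart r \<mu> using m by unfold_locales (simp add: r_partitions_iff)
  have N: "M.N = n" using m by (simp add: r_partitions_iff)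
  have "\<forall>t \<in> big_torus r. adhm_act r n t ` adhm_class r n (alpha_data r n \<mu>) = adhm_class r n (alpha_data r n \<mu>)"
    by (rule adhm_class_fixed_big[OF alpha_ok[OF m]]) (use M.alpha_fixed_big N in simp)
  then show ?thesis using alpha_ok[OF m]
    unfolding A_fixed_big_def A_moduli_def alpha_def by auto
qed

lemma adhm_class_mem: "y \<in> adhm_class r n x \<Longrightarrow> adhm_data r n y \<and> adhm_equiv n x y"
  unfolding adhm_class_def by simp

lemma cyc_class_mem: "y \<in> cyc_class r n x \<Longrightarrow> cyc_data r n y \<and> cyc_equiv n x y"
  unfolding cyc_class_def by simp

lemma A_fixed_T_char:
  assumes X: "X \<in> A_fixed_T r n"
  shows "\<exists>\<mu>\<in>r_partitions r n. X = alpha r n \<mu>"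
proof -
  obtain x where x: "adhm_data r n x" "X = adhm_class r n x" using X unfolding A_fixed_T_def A_moduli_def by auto
  obtain B1 B2 I J where xx: "x = (B1,B2,I,J)" by (cases x) auto
  have fx: "adhm_act r n (small_to_big 2 3 5) ` X = X" using X unfolding A_fixed_T_def by auto
  have "adhm_act r n (small_to_big 2 3 5) x \<in> X" using fx adhm_class_self[OF x(1)] x(2) by blast
  then have e: "adhm_equiv n x (adhm_act r n (small_to_big 2 3 5) x)" using x(2) adhm_class_mem by blast
  obtain g where "fixpt r n B1 B2 I J g" using fixpt_of_adhm[of r n B1 B2 I J] x(1) e xx by blast
  then interpret F: fixpt r n B1 B2 I J g .
  have "adhm_class r n (alpha_data r n F.mux) = adhm_class r n x"
    using adhm_class_eq[OF alpha_ok[OF F.mux_part] x(1)] F.fix_equiv xx by simp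
  then show ?thesis using F.mux_part x(2) unfolding alpha_def by auto
qed

lemma partI: "\<mu> \<in> nested_partitions r n \<Longrightarrow> \<mu> \<in> r_partitions r n \<and> nested r \<mu>"
  unfolding nested_partitions_def by simp

definition fQ :: "nat \<Rightarrow> nat \<Rightarrow> (nat \<Rightarrow> (nat \<times> nat) set) \<Rightarrow> cycrep set" where
  "fQ r n \<mu> = cyc_class r n (alphaQ_data r n \<mu>)"

lemma fQ_fixed:
  assumes m: "\<mu> \<in> nested_partitions r n" shows "fQ r n \<mu> \<in> Q_fixed_T r n"
proof -
  have m': "\<mu> \<in> r_partitions r n" "nested r \<mu>" using partI[OF m] by auto
  interpret M: vpart r \<mu> using m' by unfold_locales (simp add: r_partitions_iff)
  have N: "M.N = n" using m' by (simp add: r_partitions_iff)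
  have "\<forall>t1 t2 t3. t1 \<noteq> 0 \<and> t2 \<noteq> 0 \<and> t3 \<noteq> 0 \<longrightarrow> cyc_act r n t1 t2 t3 ` fQ r n \<mu> = fQ r n \<mu>"
    unfolding fQ_def by (rule cyc_class_fixed[OF alphaQ_ok[OF m]]) (use M.alphaQ_fixed[OF m'(2)] N in simp)
  then show ?thesis using alphaQ_ok[OF m] unfolding Q_fixed_T_def Q_moduli_def fQ_def by auto
qed

lemma forget_equiv: "cyc_equiv n x y \<Longrightarrow> adhm_equiv n (forget_B3 x) (forget_B3 y)"
  unfolding cyc_equiv_def adhm_equiv_def forget_B3_def by (auto split: prod.splits)

lemma forget_alphaQ: "forget_B3 (alphaQ_data r n \<mu>) = alpha_data r n \<mu>"
  unfolding alphaQ_data_def forget_B3_def alpha_data_def Let_def by simp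

lemma cyc_forget_data: "cyc_data r n x \<Longrightarrow> adhm_data r n (forget_B3 x)"
  unfolding cyc_data_def adhm_data_def forget_B3_def
  by (auto split: prod.splits intro: stable_drop_B3)

lemma iota_eq:
  assumes d: "cyc_data r n x0" shows "iota r n (cyc_class r n x0) = adhm_class r n (forget_B3 x0)"
proof -
  let ?x = "SOME x. x \<in> cyc_class r n x0"
  have "?x \<in> cyc_class r n x0" using cyc_class_self[OF d] by (rule someI)
  then have x: "cyc_data r n ?x" "cyc_equiv n x0 ?x" using cyc_class_mem by auto
  have "adhm_class r n (forget_B3 x0) = adhm_class r n (forget_B3 ?x)"
    by (rule adhm_class_eq[OF cyc_forget_data[OF d] cyc_forget_data[OF x(1)] forget_equiv[OF x(2)]])
  then show ?thesis unfolding iota_def by simp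
qed

lemma iota_fQ: "\<mu> \<in> nested_partitions r n \<Longrightarrow> iota r n (fQ r n \<mu>) = alpha r n \<mu>"
  unfolding fQ_def alpha_def using iota_eq[OF alphaQ_ok] forget_alphaQ by simp

lemma fixed_elem:
  assumes d: "cyc_data r n x0" and f: "cyc_act r n 2 3 5 ` cyc_class r n x0 = cyc_class r n x0"
    and y: "y \<in> cyc_class r n x0"
  shows "cyc_data r n y \<and> cyc_equiv n y (cyc_act r n 2 3 5 y)"
proof -
  have y': "cyc_data r n y" "cyc_equiv n x0 y" using cyc_class_mem[OF y] by auto
  have "cyc_act r n 2 3 5 y \<in> cyc_class r n x0" using f y by blast
  then have z: "cyc_data r n (cyc_act r n 2 3 5 y)" "cyc_equiv n x0 (cyc_act r n 2 3 5 y)" using cyc_class_mem by auto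
  have c: "cyc_carr r n x0" "cyc_carr r n y" "cyc_carr r n (cyc_act r n 2 3 5 y)"
    using d y'(1) z(1) cyc_data_carr by auto
  have "cyc_equiv n y x0" by (rule cyc_equiv_sym[OF c(1,2) y'(2)])
  then show ?thesis using cyc_equiv_trans[OF c(2,1,3) _ z(2)] y'(1) by blast
qed

lemma Q_fixed_char:
  assumes X: "X \<in> Q_fixed_T r n"
  shows "\<exists>\<mu>\<in>nested_partitions r n. X = fQ r n \<mu>"
proof -
  obtain x where x: "cyc_data r n x" "X = cyc_class r n x" using X unfolding Q_fixed_T_def Q_moduli_def by auto
  obtain B1 B2 B3 I J where xx: "x = (B1,B2,B3,I,J)" by (cases x) auto
  have fx: "cyc_act r n 2 3 5 ` X = X" using X unfolding Q_fixed_T_def by auto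
  have e: "cyc_equiv n x (cyc_act r n 2 3 5 x)"
    using fixed_elem[OF x(1) _ cyc_class_self[OF x(1)]] fx x(2) by simp
  obtain g where "fixptQ r n B1 B2 I J g B3" using fixptQ_of_cyc[of r n B1 B2 B3 I J] x(1) e xx by blast
  then interpret F: fixptQ r n B1 B2 I J g B3 .
  have np: "F.mux \<in> nested_partitions r n" using F.mux_part F.mux_nested by (simp add: nested_partitions_def)
  have "cyc_class r n (alphaQ_data r n F.mux) = cyc_class r n x"
    using cyc_class_eq[OF alphaQ_ok[OF np] x(1)] F.fixQ_equiv xx by simp
  then show ?thesis using np x(2) unfolding fQ_def by auto
qed

lemma Q_fixed_J0:
  assumes X: "X \<in> Q_fixed_T r n" and y: "y \<in> X"
  shows "(case y of (B1,B2,B3,I,J) \<Rightarrow> J = 0\<^sub>m r n)"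
proof -
  obtain x where x: "cyc_data r n x" "X = cyc_class r n x" using X unfolding Q_fixed_T_def Q_moduli_def by auto
  have fx: "cyc_act r n 2 3 5 ` X = X" using X unfolding Q_fixed_T_def by auto
  obtain B1 B2 B3 I J where yy: "y = (B1,B2,B3,I,J)" by (cases y) auto
  have ye: "cyc_data r n y \<and> cyc_equiv n y (cyc_act r n 2 3 5 y)" using fixed_elem[OF x(1)] fx x(2) y by simp
  obtain g where "fixptQ r n B1 B2 I J g B3" using fixptQ_of_cyc[of r n B1 B2 B3 I J] ye yy by blast
  then interpret F: fixptQ r n B1 B2 I J g B3 .
  show ?thesis using F.J_zero yy by simp
qed

lemma alpha_eq_inj:
  assumes m: "\<mu> \<in> r_partitions r n" and v: "\<nu> \<in> r_partitions r n" and e: "alpha r n \<mu> = alpha r n \<nu>"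
  shows "\<mu> = \<nu>"
proof -
  have "alpha_data r n \<mu> \<in> alpha r n \<nu>" using adhm_class_self[OF alpha_ok[OF m]] e unfolding alpha_def by simp
  then have "adhm_equiv n (alpha_data r n \<nu>) (alpha_data r n \<mu>)" unfolding alpha_def using adhm_class_mem by blast
  then show ?thesis using alpha_inj[OF v m] by simp
qed

lemma young_bound:
  assumes Y: "young Y" and ij: "(i,j) \<in> Y"
  shows "i < card Y" "j < card Y"
proof -
  have f: "finite Y" using Y by (simp add: young_def)
  have "(\<lambda>k. (k,j)) ` {..i} \<subseteq> Y" using Y ij unfolding young_def by auto
  then have "card ((\<lambda>k. (k,j)) ` {..i}) \<le> card Y" using f by (rule card_mono[rotated])
  moreover have "card ((\<lambda>k. (k,j)) ` {..i}) = Suc i" by (subst card_image) (auto simp: inj_on_def)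
  ultimately show "i < card Y" by simp
  have "(\<lambda>k. (i,k)) ` {..j} \<subseteq> Y" using Y ij unfolding young_def by auto
  then have "card ((\<lambda>k. (i,k)) ` {..j}) \<le> card Y" using f by (rule card_mono[rotated])
  moreover have "card ((\<lambda>k. (i,k)) ` {..j}) = Suc j" by (subst card_image) (auto simp: inj_on_def)
  ultimately show "j < card Y" by simp
qed

lemma r_partitions_finite: "finite (r_partitions r n)"
proof -
  let ?F = "\<lambda>\<mu>::nat \<Rightarrow> (nat \<times> nat) set. restrict \<mu> {..<r}"
  have inj: "inj_on ?F (r_partitions r n)"
  proof (rule inj_onI)
    fix \<mu> \<nu> assume m: "\<mu> \<in> r_partitions r n" and v: "\<nu> \<in> r_partitions r n" and e: "?F \<mu> = ?F \<nu>"
    show "\<mu> = \<nu>"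
    proof
      fix a show "\<mu> a = \<nu> a"
      proof (cases "a < r")
        case True then show ?thesis using fun_cong[OF e, of a] by simp
      next
        case False then show ?thesis using m v by (simp add: r_partitions_def)
      qed
    qed
  qed
  have sub: "?F ` r_partitions r n \<subseteq> PiE {..<r} (\<lambda>_. Pow ({..<n} \<times> {..<n}))"
  proof
    fix f assume "f \<in> ?F ` r_partitions r n"
    then obtain \<mu> where m: "\<mu> \<in> r_partitions r n" and f: "f = ?F \<mu>" by auto
    have "\<mu> a \<subseteq> {..<n} \<times> {..<n}" if a: "a < r" for a
    proof
      fix x assume x: "x \<in> \<mu> a"
      obtain i j where xx: "x = (i,j)" by (cases x) auto
      have y: "young (\<mu> a)" using m a by (simp add: r_partitions_def)
      have "card (\<mu> a) \<le> (\<Sum>b<r. card (\<mu> b))" using a by (intro member_le_sum) auto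
      then have "card (\<mu> a) \<le> n" using m by (simp add: r_partitions_def)
      then show "x \<in> {..<n} \<times> {..<n}" using young_bound[OF y, of i j] x xx by auto
    qed
    then show "f \<in> PiE {..<r} (\<lambda>_. Pow ({..<n} \<times> {..<n}))" unfolding f by auto
  qed
  have "finite (PiE {..<r} (\<lambda>_. Pow ({..<n} \<times> {..<n})))" by (intro finite_PiE) auto
  then have "finite (?F ` r_partitions r n)" using sub finite_subset by blast
  then show ?thesis using inj finite_imageD by blast
qed

theorem proposition4p1:
  fixes r n :: nat
  shows "A_fixed_T r n = A_fixed_big r n
    \<and> (\<forall>\<mu> \<in> r_partitions r n. alpha r n \<mu> \<in> iota r n ` Q_fixed_T r n \<longleftrightarrow> nested r \<mu>)
    \<and> finite (Q_fixed_T r n)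
    \<and> (\<exists>f. bij_betw f (nested_partitions r n) (Q_fixed_T r n)
           \<and> (\<forall>\<mu> \<in> nested_partitions r n. iota r n (f \<mu>) = alpha r n \<mu>))
    \<and> Q0_fixed_T r n = Q_fixed_T r n
    \<and> finite (Q0_fixed_T r n)
    \<and> (\<exists>f. bij_betw f (nested_partitions r n) (Q0_fixed_T r n))"
proof -
  have i: "A_fixed_T r n = A_fixed_big r n"
  proof
    show "A_fixed_T r n \<subseteq> A_fixed_big r n" using A_fixed_T_char alpha_big by blast
    show "A_fixed_big r n \<subseteq> A_fixed_T r n"
    proof
      fix X assume X: "X \<in> A_fixed_big r n"
      have "small_to_big t1 t2 t3 \<in> big_torus r" if "t1 \<noteq> 0" "t2 \<noteq> 0" "t3 \<noteq> 0" for t1 t2 t3 :: complex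
        using that by (simp add: small_to_big_def big_torus_def)
      then show "X \<in> A_fixed_T r n" using X unfolding A_fixed_big_def A_fixed_T_def by auto
    qed
  qed
  have img: "Q_fixed_T r n = fQ r n ` nested_partitions r n"
    using Q_fixed_char fQ_fixed by blast
  have inj: "inj_on (fQ r n) (nested_partitions r n)"
  proof (rule inj_onI)
    fix \<mu> \<nu> assume m: "\<mu> \<in> nested_partitions r n" and v: "\<nu> \<in> nested_partitions r n" and e: "fQ r n \<mu> = fQ r n \<nu>"
    have "alpha r n \<mu> = alpha r n \<nu>" using iota_fQ[OF m] iota_fQ[OF v] e by simp
    then show "\<mu> = \<nu>" using alpha_eq_inj partI[OF m] partI[OF v] by blast
  qed
  have bij: "bij_betw (fQ r n) (nested_partitions r n) (Q_fixed_T r n)"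
    using inj img by (simp add: bij_betw_def)
  have fin_np: "finite (nested_partitions r n)"
    using r_partitions_finite[of r n] by (rule finite_subset[rotated]) (auto simp: nested_partitions_def)
  have fin: "finite (Q_fixed_T r n)" using img fin_np by simp
  have ii: "\<forall>\<mu> \<in> r_partitions r n. alpha r n \<mu> \<in> iota r n ` Q_fixed_T r n \<longleftrightarrow> nested r \<mu>"
  proof (intro ballI iffI)
    fix \<mu> assume m: "\<mu> \<in> r_partitions r n" and "nested r \<mu>"
    then have np: "\<mu> \<in> nested_partitions r n" by (simp add: nested_partitions_def)
    then show "alpha r n \<mu> \<in> iota r n ` Q_fixed_T r n" using iota_fQ[OF np] fQ_fixed[OF np] by force
  next
    fix \<mu> assume m: "\<mu> \<in> r_partitions r n" and "alpha r n \<mu> \<in> iota r n ` Q_fixed_T r n"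
    then obtain X where X: "X \<in> Q_fixed_T r n" "alpha r n \<mu> = iota r n X" by auto
    obtain \<nu> where v: "\<nu> \<in> nested_partitions r n" "X = fQ r n \<nu>" using Q_fixed_char[OF X(1)] by auto
    have "alpha r n \<mu> = alpha r n \<nu>" using X(2) v iota_fQ by simp
    then have "\<mu> = \<nu>" using alpha_eq_inj m partI[OF v(1)] by blast
    then show "nested r \<mu>" using partI[OF v(1)] by simp
  qed
  have iii: "Q0_fixed_T r n = Q_fixed_T r n"
  proof
    show "Q0_fixed_T r n \<subseteq> Q_fixed_T r n" unfolding Q0_fixed_T_def Q_fixed_T_def Q0_moduli_def by auto
    show "Q_fixed_T r n \<subseteq> Q0_fixed_T r n"
    proof
      fix X assume X: "X \<in> Q_fixed_T r n"
      then have "\<forall>x\<in>X. (case x of (B1,B2,B3,I,J) \<Rightarrow> J = 0\<^sub>m r n)" using Q_fixed_J0 by blast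
      then show "X \<in> Q0_fixed_T r n" using X unfolding Q0_fixed_T_def Q_fixed_T_def Q0_moduli_def by auto
    qed
  qed
  show ?thesis
    using i ii fin bij iii iota_fQ by auto
qed


end
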